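(* Let $p$ be an odd prime. Let $\mathcal{L}=(L_1,\dots,L_m)$ be a square-independent system of linear forms in $d$ variables over $\mathbb{F}_p$, whose linear span has dimension $d'$. Let $\Gamma_1:\mathbb{F}_p^n\to\mathbb{F}_p^{d_1}$ be a surjective linear map and let $\Gamma_2:\mathbb{F}_p^n\to\mathbb{F}_p^{d_2}$ be a quadratic map of rank at least $r$. Let $a_1,\dots,a_m\in\mathbb{F}_p^{d_1}$ and $b_1,\dots,b_m\in\mathbb{F}_p^{d_2}$. Let $Z$ be the subspace of $(\mathbb{F}_p^{d_1})^m$ consisting of all $(c_1,\dots,c_m)$ with $\sum_i\mu_ic_i=0$ whenever $\mu\in\mathbb{F}_p^m$ satisfies $\sum_i\mu_iL_i=0$. If $\mathbf{x}$ is chosen uniformly at random from $(\mathbb{F}_p^n)^d$, then the probability that $\Gamma_1(L_i(\mathbf{x}))=a_i$ and $\Gamma_2(L_i(\mathbf{x}))=b_i$ for every $i\le m$ is zero if $(a_1,\dots,a_m)\notin Z$, and if $(a_1,\dots,a_m)\in Z$ it differs from $p^{-d_1d'-d_2m}$ by at most $p^{d_1-d'd_1-r/2}$.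
   Context: A linear form in $d$ variables is $L(x_1,\dots,x_d)=\sum_{r=1}^d\gamma_rx_r$ with $\gamma_r\in\mathbb{F}_p$; for $\mathbf{x}\in(\mathbb{F}_p^n)^d$, $L(\mathbf{x})=\sum_r\gamma_rx_r\in\mathbb{F}_p^n$. A system $(L_1,\dots,L_m)$ with $L_i=\sum_r\gamma^{(i)}_rx_r$ is square-independent if the $d\times d$ matrices $(\gamma^{(i)}_r\gamma^{(i)}_s)_{r,s}$ are linearly independent over $\mathbb{F}_p$. A quadratic form on $\mathbb{F}_p^n$ is $q(x)=x^TMx$, $M$ symmetric over $\mathbb{F}_p$, with associated bilinear form $\beta(x,y)=(q(x+y)-q(x)-q(y))/2$. A quadratic map $\Gamma_2=(q_1,\dots,q_{d_2})$ has rank at least $r$ if $\sum_j\lambda_j\beta_j$ has rank at least $r$ for every nonzero $\lambda\in\mathbb{F}_p^{d_2}$, where $\beta_j$ is the bilinear form of $q_j$. *)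

theory Defs
  imports "HOL-Analysis.Analysis"
begin

text \<open>Field F_p is modelled by a finite field type 'k of prime cardinality p = CARD('k).
  F_p^n is 'k^'n (n = CARD('n)).\<close>

definition lin_form_apply :: "'k::field ^ 'd \<Rightarrow> ('k ^ 'n) ^ 'd \<Rightarrow> 'k ^ 'n" where
  "lin_form_apply g x = (\<Sum>r\<in>UNIV. g $ r *s x $ r)"

definition square_independent :: "('m::finite \<Rightarrow> 'k::field ^ 'd) \<Rightarrow> bool" where
  "square_independent g \<longleftrightarrow>
     (\<forall>\<mu>::'m \<Rightarrow> 'k. (\<forall>r s. (\<Sum>i\<in>UNIV. \<mu> i * (g i $ r * g i $ s)) = 0) \<longrightarrow> (\<forall>i. \<mu> i = 0))"

definition is_quadratic_form :: "('k::field ^ 'n \<Rightarrow> 'k) \<Rightarrow> bool" where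
  "is_quadratic_form q \<longleftrightarrow>
     (\<exists>M::'k^'n^'n. transpose M = M \<and> (\<forall>x. q x = (\<Sum>i\<in>UNIV. \<Sum>k\<in>UNIV. x $ i * M $ i $ k * x $ k)))"

definition assoc_bilinear :: "('k::field ^ 'n \<Rightarrow> 'k) \<Rightarrow> 'k ^ 'n \<Rightarrow> 'k ^ 'n \<Rightarrow> 'k" where
  "assoc_bilinear q x y = (q (x + y) - q x - q y) / 2"

text \<open>Rank of a bilinear form: dimension of the image of x \<mapsto> beta(x, \<cdot>) in the dual,
  the functional beta(x,\<cdot>) being represented by its coordinate vector.\<close>
definition bilinear_rank :: "('k::field ^ 'n \<Rightarrow> 'k ^ 'n \<Rightarrow> 'k) \<Rightarrow> nat" where
  "bilinear_rank \<beta> = vec.dim (range (\<lambda>x. \<chi> k. \<beta> x (axis k 1)))"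

definition is_quadratic_map :: "('k::field ^ 'n \<Rightarrow> 'k ^ 'd2) \<Rightarrow> bool" where
  "is_quadratic_map G \<longleftrightarrow> (\<forall>j. is_quadratic_form (\<lambda>x. G x $ j))"

definition quad_rank_at_least :: "('k::field ^ 'n \<Rightarrow> 'k ^ 'd2) \<Rightarrow> nat \<Rightarrow> bool" where
  "quad_rank_at_least G r \<longleftrightarrow>
     (\<forall>c::'k^'d2. c \<noteq> 0 \<longrightarrow>
        bilinear_rank (\<lambda>x y. \<Sum>j\<in>UNIV. c $ j * assoc_bilinear (\<lambda>z. G z $ j) x y) \<ge> r)"

end

theory Submission
  imports Defs "HOL-Number_Theory.Residues"
begin


lemma fiber_card:
  fixes A :: "'a::ab_group_add set" and g :: "'a \<Rightarrow> 'b"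
  assumes fin: "finite A" and z: "0 \<in> A" and sub: "\<And>x y. x\<in>A \<Longrightarrow> y\<in>A \<Longrightarrow> x - y \<in> A"
    and hom: "\<And>x y. x\<in>A \<Longrightarrow> y\<in>A \<Longrightarrow> (g x = g y) = (g (x - y) = g 0)"
  shows fiber_card_eq: "\<And>y. y \<in> g`A \<Longrightarrow> card {x\<in>A. g x = y} = card {x\<in>A. g x = g 0}"
    and fiber_card_total: "card A = card (g`A) * card {x\<in>A. g x = g 0}"
proof -
  have add: "x + y \<in> A" if "x\<in>A" "y\<in>A" for x y
  proof -
    have "0 - y \<in> A" using sub z that by blast
    then have "x - (0 - y) \<in> A" using sub that by blast
    then show ?thesis by simp
  qed
  show eq: "card {x\<in>A. g x = y} = card {x\<in>A. g x = g 0}" if "y \<in> g`A" for y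
  proof -
    obtain x0 where x0: "x0 \<in> A" "y = g x0" using \<open>y \<in> g`A\<close> by blast
    have "bij_betw (\<lambda>h. h + x0) {x\<in>A. g x = g 0} {x\<in>A. g x = y}"
    proof (rule bij_betwI[where g="\<lambda>x. x - x0"])
      show "(\<lambda>h. h + x0) \<in> {x \<in> A. g x = g 0} \<rightarrow> {x \<in> A. g x = y}"
        using add x0 hom by fastforce
      show "(\<lambda>x. x - x0) \<in> {x \<in> A. g x = y} \<rightarrow> {x \<in> A. g x = g 0}"
        using sub x0 hom by fastforce
    qed auto
    then show ?thesis by (simp add: bij_betw_same_card)
  qed
  have "A = (\<Union>y\<in>g`A. {x\<in>A. g x = y})" by auto
  then have "card A = (\<Sum>y\<in>g`A. card {x\<in>A. g x = y})"
  proof -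
    have "card (\<Union>y\<in>g`A. {x\<in>A. g x = y}) = (\<Sum>y\<in>g`A. card {x\<in>A. g x = y})"
      by (rule card_UN_disjoint) (use fin in auto)
    then show ?thesis using \<open>A = _\<close> by simp
  qed
  also have "\<dots> = (\<Sum>y\<in>g`A. card {x\<in>A. g x = g 0})" using eq by simp
  finally show "card A = card (g`A) * card {x\<in>A. g x = g 0}" by simp
qed


definition dotk :: "'k::comm_ring_1^'a \<Rightarrow> 'k^'a \<Rightarrow> 'k" where
  "dotk x y = (\<Sum>i\<in>UNIV. x$i * y$i)"

definition perp :: "('k::comm_ring_1^'a) set \<Rightarrow> ('k^'a) set" where
  "perp S = {t. \<forall>s\<in>S. dotk t s = 0}"

lemma dotk_comm: "dotk x y = dotk y x"
  unfolding dotk_def by (simp add: mult.commute)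
lemma dotk_add_right: "dotk x (y + z) = dotk x y + dotk x z"
  unfolding dotk_def by (simp add: distrib_left sum.distrib)
lemma dotk_add_left: "dotk (x + y) z = dotk x z + dotk y z"
  unfolding dotk_def by (simp add: distrib_right sum.distrib)
lemma dotk_diff_left: "dotk (x - y) z = dotk x z - dotk y z"
  unfolding dotk_def by (simp add: left_diff_distrib sum_subtractf)
lemma dotk_diff_right: "dotk x (y - z) = dotk x y - dotk x z"
  unfolding dotk_def by (simp add: right_diff_distrib sum_subtractf)
lemma dotk_scale_right: "dotk x (c *s y) = c * dotk x y"
  unfolding dotk_def by (simp add: sum_distrib_left algebra_simps)
lemma dotk_scale_left: "dotk (c *s x) y = c * dotk x y"
  unfolding dotk_def by (simp add: sum_distrib_left algebra_simps)
lemma dotk_zero_right[simp]: "dotk x 0 = 0" and dotk_zero_left[simp]: "dotk 0 x = 0"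
  unfolding dotk_def by simp_all
lemma dotk_sum_right: "dotk x (\<Sum>i\<in>I. f i) = (\<Sum>i\<in>I. dotk x (f i))"
  unfolding dotk_def by (simp add: sum_distrib_left sum.swap[of _ I] )
lemma dotk_sum_left: "dotk (\<Sum>i\<in>I. f i) x = (\<Sum>i\<in>I. dotk (f i) x)"
  unfolding dotk_def by (simp add: sum_distrib_right sum.swap[of _ I] )
lemma dotk_axis: "dotk x (axis a 1) = x $ a"
  unfolding dotk_def axis_def by (simp add: if_distrib cong: if_cong)



lemma span_inj_aux:
  fixes B :: "('k::{field,finite}^'n) set"
  assumes ind: "vec.independent B"
  shows "inj_on (\<lambda>u. \<Sum>v\<in>B. u v *s v) (PiE B (\<lambda>_. UNIV))"
proof (rule inj_onI)
  fix u w assume u: "u \<in> PiE B (\<lambda>_. UNIV)" and w: "w \<in> PiE B (\<lambda>_. UNIV)"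
    and e: "(\<lambda>u. \<Sum>v\<in>B. u v *s v) u = (\<lambda>u. \<Sum>v\<in>B. u v *s v) w"
  have "(\<Sum>v\<in>B. (u v - w v) *s v) = (\<Sum>v\<in>B. u v *s v) - (\<Sum>v\<in>B. w v *s v)"
    by (simp only: vec.scale_left_diff_distrib sum_subtractf)
  also have "\<dots> = 0" using e by simp
  finally have z: "(\<Sum>v\<in>B. (u v - w v) *s v) = 0" .
  have indS: "\<forall>S\<subseteq>B. finite S \<longrightarrow> (\<forall>u. (\<Sum>v\<in>S. u v *s v) = 0 \<longrightarrow> (\<forall>v\<in>S. u v = 0))"
    using ind unfolding vec.independent_explicit_finite_subsets .
  have "\<forall>v\<in>B. u v - w v = 0"
  proof
    fix v assume "v \<in> B"
    then show "u v - w v = 0" using indS[rule_format, of B "\<lambda>v. u v - w v" v] z by simp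
  qed
  then show "u = w" using u w by (auto simp: PiE_def extensional_def fun_eq_iff)
qed

lemma span_image_aux:
  fixes B :: "('k::{field,finite}^'n) set"
  shows "vec.span B = (\<lambda>u. \<Sum>v\<in>B. u v *s v) ` (PiE B (\<lambda>_. UNIV))"
proof -
  have "vec.span B = range (\<lambda>u. \<Sum>v\<in>B. u v *s v)" by (rule vec.span_finite) simp
  also have "\<dots> = (\<lambda>u. \<Sum>v\<in>B. u v *s v) ` (PiE B (\<lambda>_. UNIV))"
  proof (rule subset_antisym)
    show "range (\<lambda>u. \<Sum>v\<in>B. u v *s v) \<subseteq> (\<lambda>u. \<Sum>v\<in>B. u v *s v) ` (PiE B (\<lambda>_. UNIV))"
    proof
      fix y assume "y \<in> range (\<lambda>u. \<Sum>v\<in>B. u v *s v)"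
      then obtain u where u: "y = (\<Sum>v\<in>B. u v *s v)" by blast
      have "(\<Sum>v\<in>B. restrict u B v *s v) = (\<Sum>v\<in>B. u v *s v)" by (rule sum.cong) auto
      moreover have "restrict u B \<in> PiE B (\<lambda>_. UNIV)" by simp
      ultimately show "y \<in> (\<lambda>u. \<Sum>v\<in>B. u v *s v) ` (PiE B (\<lambda>_. UNIV))"
        using u by (intro image_eqI[where x="restrict u B"]) simp_all
    qed
  qed (rule image_subsetI, simp)
  finally show ?thesis .
qed

lemma card_span_indep:
  fixes B :: "('k::{field,finite}^'n) set"
  assumes ind: "vec.independent B"
  shows "card (vec.span B) = CARD('k) ^ card B"
proof -
  have "card (vec.span B) = card (PiE B (\<lambda>_. UNIV :: 'k set))"
    unfolding span_image_aux by (rule card_image[OF span_inj_aux[OF ind]])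
  also have "\<dots> = CARD('k) ^ card B" by (simp add: card_PiE)
  finally show ?thesis .
qed

lemma card_span:
  fixes S :: "('k::{field,finite}^'n) set"
  shows "card (vec.span S) = CARD('k) ^ vec.dim S"
proof -
  obtain B where B: "B \<subseteq> S" "vec.independent B" "S \<subseteq> vec.span B" "card B = vec.dim S"
    using vec.basis_exists by blast
  have "vec.span B = vec.span S"
  proof
    show "vec.span B \<subseteq> vec.span S" using B(1) by (rule vec.span_mono)
    show "vec.span S \<subseteq> vec.span B" by (intro vec.span_minimal[OF B(3)] vec.subspace_span)
  qed
  then show ?thesis using card_span_indep[OF B(2)] B(4) by simp
qed



lemma perp_span_eq:
  fixes B :: "('k::field^'a) set"
  assumes "t \<in> perp B" "s \<in> vec.span B"
  shows "dotk t s = 0"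
  using assms(2)
proof (induction rule: vec.span_induct_alt)
  case base then show ?case by simp
next
  case (step c x y)
  then show ?case using assms(1) unfolding perp_def
    by (simp add: dotk_add_right dotk_scale_right)
qed

lemma dotk_linear_functional:
  fixes g :: "'k::field^'a \<Rightarrow> 'k^1"
  assumes lin: "Vector_Spaces.linear (*s) (*s) g"
  shows "dotk (\<chi> i. g (axis i 1) $ 1) x = g x $ 1"
proof -
  have "g x = g (\<Sum>i\<in>UNIV. x$i *s axis i 1)" by (simp add: basis_expansion)
  also have "\<dots> = (\<Sum>i\<in>UNIV. x$i *s g (axis i 1))"
    by (simp add: vec.linear_sum[OF lin] vec.linear_scale[OF lin])
  finally have "g x $ 1 = (\<Sum>i\<in>UNIV. x$i * g (axis i 1) $ 1)"
    by (simp add: sum_component)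
  then show ?thesis unfolding dotk_def by (simp add: mult.commute)
qed

lemma perp_card:
  fixes S :: "('k::{field,finite}^'a) set"
  shows "card (perp S) * card (vec.span S) = CARD('k) ^ CARD('a)"
proof -
  obtain B where B: "B \<subseteq> S" "vec.independent B" "S \<subseteq> vec.span B" "card B = vec.dim S"
    using vec.basis_exists by blast
  have pSB: "perp S = perp B"
  proof
    show "perp S \<subseteq> perp B" using B(1) unfolding perp_def by auto
    show "perp B \<subseteq> perp S"
      using B(3) perp_span_eq unfolding perp_def by blast
  qed
  define \<phi> where "\<phi> t = restrict (\<lambda>b. dotk t b) B" for t :: "'k^'a"
  have hom: "(\<phi> x = \<phi> y) = (\<phi> (x - y) = \<phi> 0)" for x y
    unfolding \<phi>_def by (auto simp: restrict_def fun_eq_iff dotk_diff_left)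
  have ker: "{t \<in> UNIV. \<phi> t = \<phi> 0} = perp B"
    unfolding \<phi>_def perp_def by (auto simp: restrict_def fun_eq_iff)
  have rng: "\<phi> ` UNIV = PiE B (\<lambda>_. UNIV)"
  proof
    show "\<phi> ` UNIV \<subseteq> PiE B (\<lambda>_. UNIV)" unfolding \<phi>_def by auto
    show "PiE B (\<lambda>_. UNIV) \<subseteq> \<phi> ` UNIV"
    proof
      fix v assume v: "v \<in> PiE B (\<lambda>_. UNIV :: 'k set)"
      obtain g :: "'k^'a \<Rightarrow> 'k^1" where g: "Vector_Spaces.linear (*s) (*s) g"
        "\<forall>x\<in>B. g x = (\<chi> _. v x)"
        using vec.linear_independent_extend[OF B(2), where f="\<lambda>x. (\<chi> _. v x) :: 'k^1"] by blast
      define t where "t = (\<chi> i. g (axis i 1) $ 1)"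
      have "\<phi> t = v"
      proof
        fix b show "\<phi> t b = v b"
        proof (cases "b \<in> B")
          case True
          then show ?thesis unfolding \<phi>_def t_def
            using dotk_linear_functional[OF g(1), of b] g(2) by simp
        next
          case False
          then show ?thesis using v unfolding \<phi>_def by (simp add: PiE_def extensional_def)
        qed
      qed
      then show "v \<in> \<phi> ` UNIV" by (metis rangeI)
    qed
  qed
  have "card (UNIV :: ('k^'a) set) = card (\<phi> ` UNIV) * card {t \<in> UNIV. \<phi> t = \<phi> 0}"
    by (rule fiber_card_total, simp, simp, simp, rule hom)
  also have "\<dots> = CARD('k) ^ card B * card (perp S)"
    using rng ker pSB by (simp add: card_PiE)
  also have "CARD('k) ^ card B = card (vec.span S)" using card_span[of S] B(4) by simp
  finally show ?thesis by (simp add: mult.commute)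
qed



lemma CHAR_eq_CARD:
  assumes "prime CARD('k::{field,finite})"
  shows "CHAR('k) = CARD('k)"
proof -
  have d: "CHAR('k) dvd CARD('k)" by (rule CHAR_dvd_CARD)
  have "CHAR('k) \<noteq> 1"
  proof
    assume "CHAR('k) = 1"
    then have "of_nat 1 = (0::'k)" by (simp add: of_nat_eq_0_iff_char_dvd)
    then show False by simp
  qed
  with d assms show ?thesis by (metis prime_nat_iff)
qed

definition ee :: "nat \<Rightarrow> int \<Rightarrow> complex" where
  "ee p j = exp (2 * of_real pi * \<i> * of_int j / of_nat p)"

lemma ee_add: "ee p (a + b) = ee p a * ee p b"
  unfolding ee_def by (simp add: add_divide_distrib distrib_left exp_add)

lemma ee_period: assumes "p > 0" shows "ee p (int p * q) = 1"
proof -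
  have "2 * of_real pi * \<i> * of_int (int p * q) / of_nat p = (2 * of_int q * of_real pi) * \<i>"
    using assms by (simp add: field_simps)
  then show ?thesis unfolding ee_def using exp_integer_2pi[of "of_int q"] by simp
qed

lemma ee_eq_1: assumes "p > 0" shows "ee p j = 1 \<longleftrightarrow> int p dvd j"
proof
  assume "int p dvd j"
  then obtain q where "j = int p * q" by (auto elim: dvdE)
  then show "ee p j = 1" using ee_period[OF assms] by simp
next
  assume "ee p j = 1"
  then obtain n :: int where n: "Im (2 * of_real pi * \<i> * of_int j / of_nat p) = of_int (2 * n) * pi"
    unfolding ee_def exp_eq_1 by blast
  have "Im (2 * of_real pi * \<i> * of_int j / of_nat p) = 2 * pi * j / p"
    using assms by (simp add: Im_divide power2_eq_square)
  with n have "2 * pi * j / p = 2 * n * pi" by simp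
  then have "real_of_int j = real p * n" using assms pi_gt_zero
    by (simp add: field_simps)
  then have "j = int p * n" by (metis of_int_eq_iff of_int_mult of_int_of_nat_eq)
  then show "int p dvd j" by simp
qed

lemma norm_ee: "norm (ee p j) = 1"
proof -
  have "2 * of_real pi * \<i> * of_int j / of_nat p = \<i> * of_real (2 * pi * j / p)"
    by simp
  then show ?thesis unfolding ee_def by (metis norm_exp_i_times)
qed

definition psi :: "'k::{field,finite} \<Rightarrow> complex" where
  "psi t = ee CARD('k) (SOME j. of_int j = t)"

lemma of_int_surj:
  assumes "prime CARD('k::{field,finite})"
  shows "\<exists>j. of_int j = (t::'k)"
proof -
  let ?p = "CARD('k)"
  have ch: "CHAR('k) = ?p" using CHAR_eq_CARD[OF assms] .
  have inj: "inj_on (of_int :: int \<Rightarrow> 'k) {0..<int ?p}"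
  proof (rule inj_onI)
    fix x y assume x: "x \<in> {0..<int ?p}" and y: "y \<in> {0..<int ?p}" and e: "(of_int x :: 'k) = of_int y"
    then have "[x = y] (mod int ?p)" using of_int_eq_iff_cong_CHAR[where 'a='k, of x y] ch by simp
    then have "x mod int ?p = y mod int ?p" by (simp add: cong_def)
    then show "x = y" using x y by simp
  qed
  have "card ((of_int :: int \<Rightarrow> 'k) ` {0..<int ?p}) = ?p" using card_image[OF inj] by simp
  then have "(of_int :: int \<Rightarrow> 'k) ` {0..<int ?p} = UNIV"
    by (intro card_subset_eq) auto
  then show ?thesis by (metis UNIV_I imageE)
qed

context
  fixes dummy :: "'k::{field,finite}"
  assumes pr: "prime CARD('k)"
begin

lemma psi_of_int: "psi (of_int j :: 'k) = ee CARD('k) j"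
proof -
  let ?p = "CARD('k)"
  define j' where "j' = (SOME i. (of_int i :: 'k) = of_int j)"
  have "(of_int j' :: 'k) = of_int j" unfolding j'_def by (rule someI_ex) blast
  then have "[j' = j] (mod int ?p)" using of_int_eq_iff_cong_CHAR[where 'a='k, of j' j] CHAR_eq_CARD[OF pr] by simp
  then obtain q where q: "j = j' + int ?p * q" using cong_iff_lin by blast
  have p0: "?p > 0" by simp
  have "ee ?p j = ee ?p j' * ee ?p (int ?p * q)" using q ee_add by simp
  also have "\<dots> = ee ?p j'" using ee_period[OF p0] by simp
  finally show ?thesis unfolding psi_def j'_def by simp
qed

lemma psi_add: "psi (a + b :: 'k) = psi a * psi b"
proof -
  obtain i j where "a = of_int i" "b = of_int j" using of_int_surj[OF pr] by metis
  then show ?thesis using psi_of_int[of "i + j"] by (simp add: psi_of_int ee_add)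
qed

lemma psi_eq_1: "psi (a :: 'k) = 1 \<longleftrightarrow> a = 0"
proof -
  obtain i where i: "a = of_int i" using of_int_surj[OF pr] by metis
  have "psi a = 1 \<longleftrightarrow> int CARD('k) dvd i" using i psi_of_int ee_eq_1[of "CARD('k)"] by simp
  also have "\<dots> \<longleftrightarrow> a = 0" using i of_int_eq_0_iff_char_dvd[where 'a='k, of i] CHAR_eq_CARD[OF pr] by simp
  finally show ?thesis .
qed

lemma norm_psi: "norm (psi (a::'k)) = 1"
  unfolding psi_def by (rule norm_ee)

lemma psi_zero: "psi (0::'k) = 1"
  using psi_eq_1 by simp

lemma psi_diff: "psi (a - b :: 'k) = psi a * cnj (psi b)"
proof -
  have "psi (a - b) * psi b = psi a" using psi_add[of "a - b" b] by simp
  moreover have "psi b * cnj (psi b) = 1"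
    using norm_psi[of b] by (metis complex_norm_square mult.commute of_real_1 power_one)
  ultimately show ?thesis by (metis mult.assoc mult.right_neutral)
qed

end



lemma sum_shift_UNIV:
  fixes f :: "'g::{ab_group_add,finite} \<Rightarrow> 'c::comm_monoid_add"
  shows "(\<Sum>C\<in>UNIV. f (C + C0)) = (\<Sum>C\<in>UNIV. f C)"
  by (rule sum.reindex_bij_witness[of _ "\<lambda>C. C - C0" "\<lambda>C. C + C0"]) auto

context
  fixes dummy :: "'k::{field,finite}"
  assumes pr: "prime CARD('k)"
begin

lemma fourier:
  fixes P :: "'g::{ab_group_add,finite} \<Rightarrow> 'v::zero \<Rightarrow> 'k"
  assumes add: "\<And>C C' v. P (C + C') v = P C v + P C' v"
    and z: "\<And>C. P C 0 = 0"
    and nd: "\<And>v. v \<noteq> 0 \<Longrightarrow> \<exists>C. P C v \<noteq> 0"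
  shows "(\<Sum>C\<in>UNIV. psi (P C v)) = (if v = 0 then of_nat CARD('g) else 0)"
proof (cases "v = 0")
  case True
  then show ?thesis using z psi_zero[OF pr] by simp
next
  case False
  obtain C0 where C0: "P C0 v \<noteq> 0" using nd[OF False] by blast
  have "(\<Sum>C\<in>UNIV. psi (P C v)) = (\<Sum>C\<in>UNIV. psi (P (C + C0) v))"
    by (rule sum_shift_UNIV[symmetric])
  also have "\<dots> = psi (P C0 v) * (\<Sum>C\<in>UNIV. psi (P C v))"
    by (simp add: add psi_add[OF pr] sum_distrib_left mult.commute)
  finally have "(1 - psi (P C0 v)) * (\<Sum>C\<in>UNIV. psi (P C v)) = 0"
    by (simp add: algebra_simps)
  moreover have "1 - psi (P C0 v) \<noteq> 0" using psi_eq_1[OF pr] C0 by simp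
  ultimately show ?thesis using False by simp
qed

lemma gauss:
  fixes W W0 :: "'x::{ab_group_add,finite} set" and f :: "'x \<Rightarrow> 'k" and D :: "'x \<Rightarrow> 'x \<Rightarrow> 'k"
  assumes coset: "\<And>y h. y \<in> W \<Longrightarrow> (y + h \<in> W) = (h \<in> W0)"
    and neg: "\<And>w. w \<in> W0 \<Longrightarrow> - w \<in> W0"
    and fq: "\<And>y h. f (y + h) = f y + f h + D y h"
    and Dadd: "\<And>y w h. D (y + w) h = D y h + D w h"
  shows "(norm (\<Sum>x\<in>W. psi (f x)))^2 \<le> real (card W) * real (card {h\<in>W0. \<forall>w\<in>W0. D w h = 0})"
proof -
  define S where "S = (\<Sum>x\<in>W. psi (f x))"
  define T where "T h = (\<Sum>y\<in>W. psi (D y h))" for h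
  define N where "N = {h\<in>W0. \<forall>w\<in>W0. D w h = 0}"
  have inner: "(\<Sum>x\<in>W. psi (f x - f y)) = (\<Sum>h\<in>W0. psi (f h) * psi (D y h))" if y: "y \<in> W" for y
  proof -
    have "(\<Sum>x\<in>W. psi (f x - f y)) = (\<Sum>h\<in>W0. psi (f (y + h) - f y))"
    proof (rule sum.reindex_bij_witness[of _ "\<lambda>h. y + h" "\<lambda>x. x - y"])
      fix x assume x: "x \<in> W"
      show "y + (x - y) = x" by simp
      show "x - y \<in> W0" using coset[OF y, of "x - y"] x by simp
      show "psi (f (y + (x - y)) - f y) = psi (f x - f y)" by simp
    next
      fix h assume h: "h \<in> W0"
      show "y + h - y = h" by simp
      show "y + h \<in> W" using coset[OF y, of h] h by simp
    qed
    also have "\<dots> = (\<Sum>h\<in>W0. psi (f h) * psi (D y h))"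
      by (simp add: fq psi_add[OF pr])
    finally show ?thesis .
  qed
  have c: "cnj S = (\<Sum>y\<in>W. cnj (psi (f y)))" unfolding S_def by (rule cnj_sum)
  have "S * cnj S = (\<Sum>y\<in>W. S * cnj (psi (f y)))" unfolding c by (rule sum_distrib_left)
  also have "\<dots> = (\<Sum>y\<in>W. \<Sum>x\<in>W. psi (f x) * cnj (psi (f y)))"
    unfolding S_def by (simp only: sum_distrib_right)
  also have "\<dots> = (\<Sum>y\<in>W. \<Sum>x\<in>W. psi (f x - f y))"
    by (simp add: psi_diff[OF pr])
  also have "\<dots> = (\<Sum>y\<in>W. \<Sum>h\<in>W0. psi (f h) * psi (D y h))"
    by (rule sum.cong) (simp_all add: inner)
  also have "\<dots> = (\<Sum>h\<in>W0. \<Sum>y\<in>W. psi (f h) * psi (D y h))"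
    by (rule sum.swap)
  also have "\<dots> = (\<Sum>h\<in>W0. psi (f h) * T h)"
    unfolding T_def by (simp only: sum_distrib_left)
  finally have SS: "S * cnj S = (\<Sum>h\<in>W0. psi (f h) * T h)" .
  have Tbound: "norm (T h) \<le> (if h \<in> N then real (card W) else 0)" if h: "h \<in> W0" for h
  proof (cases "h \<in> N")
    case True
    have "norm (T h) \<le> (\<Sum>y\<in>W. norm (psi (D y h)))" unfolding T_def by (rule norm_sum)
    also have "\<dots> = real (card W)" by (simp add: norm_psi[OF pr])
    finally show ?thesis using True by simp
  next
    case False
    then obtain w where w: "w \<in> W0" "D w h \<noteq> 0" using h unfolding N_def by blast
    have "T h = (\<Sum>y\<in>W. psi (D (y + w) h))"
      unfolding T_def
    proof (rule sum.reindex_bij_witness[of _ "\<lambda>y. y + w" "\<lambda>y. y + - w"])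
      fix y assume y: "y \<in> W"
      show "y + w + - w = y" by simp
      show "y + w \<in> W" using coset[OF y, of w] w(1) by (simp only:)
      show "y + - w + w = y" by simp
      show "y + - w \<in> W" using coset[OF y, of "- w"] neg[OF w(1)] by (simp only:)
      show "psi (D (y + - w + w) h) = psi (D y h)" by simp
    qed
    also have "\<dots> = (\<Sum>y\<in>W. psi (D w h) * psi (D y h))"
      by (rule sum.cong) (simp_all add: Dadd psi_add[OF pr] mult.commute)
    also have "\<dots> = psi (D w h) * T h"
      unfolding T_def by (simp only: sum_distrib_left)
    finally have "(1 - psi (D w h)) * T h = 0" by (simp add: algebra_simps)
    moreover have "1 - psi (D w h) \<noteq> 0" using psi_eq_1[OF pr] w(2) by simp
    ultimately show ?thesis by simp
  qed
  have "(norm S)^2 = norm (S * cnj S)" by (simp add: norm_mult power2_eq_square)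
  also have "\<dots> \<le> (\<Sum>h\<in>W0. norm (psi (f h) * T h))" unfolding SS by (rule norm_sum)
  also have "\<dots> = (\<Sum>h\<in>W0. norm (T h))" by (simp add: norm_mult norm_psi[OF pr])
  also have "\<dots> \<le> (\<Sum>h\<in>W0. if h \<in> N then real (card W) else 0)"
    by (rule sum_mono) (rule Tbound)
  also have "\<dots> = real (card N) * real (card W)"
  proof -
    have "N \<subseteq> W0" unfolding N_def by auto
    then have "(\<Sum>h\<in>W0. if h \<in> N then real (card W) else 0) = (\<Sum>h\<in>N. real (card W))"
      by (simp add: sum.If_cases Int_absorb1)
    then show ?thesis by simp
  qed
  finally show ?thesis unfolding S_def N_def by (simp add: mult.commute)
qed

end



definition rowmap :: "('m::finite \<Rightarrow> 'k::field^'d) \<Rightarrow> 'k^'m \<Rightarrow> 'k^'d" where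
  "rowmap \<gamma> \<mu> = (\<Sum>i\<in>UNIV. \<mu>$i *s \<gamma> i)"
definition colmap :: "('m::finite \<Rightarrow> 'k::field^'d) \<Rightarrow> 'k^'d \<Rightarrow> 'k^'m" where
  "colmap \<gamma> z = (\<chi> i. dotk (\<gamma> i) z)"
definition Nset :: "('m::finite \<Rightarrow> 'k::field^'d) \<Rightarrow> ('k^'m) set" where
  "Nset \<gamma> = {\<mu>. rowmap \<gamma> \<mu> = 0}"
definition colj :: "('m::finite \<Rightarrow> 'k::field^'d1) \<Rightarrow> 'd1 \<Rightarrow> 'k^'m" where
  "colj c j = (\<chi> i. c i $ j)"

lemma rowmap_add: "rowmap \<gamma> (a + b) = rowmap \<gamma> a + rowmap \<gamma> b"
  unfolding rowmap_def by (simp add: vector_sadd_rdistrib sum.distrib)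
lemma rowmap_diff: "rowmap \<gamma> (a - b) = rowmap \<gamma> a - rowmap \<gamma> b"
  unfolding rowmap_def by (simp add: vec.scale_left_diff_distrib sum_subtractf)
lemma rowmap_scale: "rowmap \<gamma> (c *s a) = c *s rowmap \<gamma> a"
  unfolding rowmap_def by (simp add: vec.scale_sum_right vec.scale_scale)
lemma rowmap_zero: "rowmap \<gamma> 0 = 0"
  unfolding rowmap_def by simp
lemma rowmap_axis: "rowmap \<gamma> (axis i 1) = \<gamma> i"
proof -
  have "rowmap \<gamma> (axis i 1) = (\<Sum>j\<in>UNIV. (if j = i then \<gamma> i else 0))"
    unfolding rowmap_def by (rule sum.cong) (auto simp: axis_def)
  then show ?thesis by simp
qed

lemma rowmap_range: "range (rowmap \<gamma>) = vec.span (range \<gamma>)"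
proof
  show "range (rowmap \<gamma>) \<subseteq> vec.span (range \<gamma>)"
  proof
    fix x assume "x \<in> range (rowmap \<gamma>)"
    then obtain \<mu> where x: "x = rowmap \<gamma> \<mu>" by blast
    show "x \<in> vec.span (range \<gamma>)" unfolding x rowmap_def
      by (rule vec.span_sum, rule vec.span_scale, rule vec.span_base, simp)
  qed
  have "vec.subspace (range (rowmap \<gamma>))"
    unfolding vec.subspace_def
  proof (intro conjI ballI allI)
    show "0 \<in> range (rowmap \<gamma>)" using rowmap_zero by (metis rangeI)
    fix x y assume "x \<in> range (rowmap \<gamma>)" "y \<in> range (rowmap \<gamma>)"
    then obtain a b where "x = rowmap \<gamma> a" "y = rowmap \<gamma> b" by blast
    then show "x + y \<in> range (rowmap \<gamma>)" using rowmap_add by (metis rangeI)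
  next
    fix c x assume "x \<in> range (rowmap \<gamma>)"
    then obtain a where "x = rowmap \<gamma> a" by blast
    then show "c *s x \<in> range (rowmap \<gamma>)" using rowmap_scale by (metis rangeI)
  qed
  moreover have "range \<gamma> \<subseteq> range (rowmap \<gamma>)" using rowmap_axis by (metis image_subsetI rangeI)
  ultimately show "vec.span (range \<gamma>) \<subseteq> range (rowmap \<gamma>)" by (intro vec.span_minimal)
qed

lemma card_R_N:
  fixes \<gamma> :: "'m::finite \<Rightarrow> 'k::{field,finite}^'d"
  shows "card (vec.span (range \<gamma>)) * card (Nset \<gamma>) = CARD('k) ^ CARD('m)"
proof -
  have "card (UNIV :: ('k^'m) set) = card (range (rowmap \<gamma>)) * card {x \<in> UNIV. rowmap \<gamma> x = rowmap \<gamma> 0}"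
    by (rule fiber_card_total, simp, simp, simp) (simp add: rowmap_diff rowmap_zero)
  moreover have "{x \<in> UNIV. rowmap \<gamma> x = rowmap \<gamma> 0} = Nset \<gamma>"
    unfolding Nset_def by (simp add: rowmap_zero)
  ultimately show ?thesis by (simp add: rowmap_range)
qed

lemma colmap_diff: "colmap \<gamma> (a - b) = colmap \<gamma> a - colmap \<gamma> b"
  unfolding colmap_def by (simp add: vec_eq_iff dotk_diff_right)
lemma colmap_zero: "colmap \<gamma> 0 = 0"
  unfolding colmap_def by (simp add: vec_eq_iff)

lemma card_colmap_range:
  fixes \<gamma> :: "'m::finite \<Rightarrow> 'k::{field,finite}^'d"
  shows "card (range (colmap \<gamma>)) = card (vec.span (range \<gamma>))"
proof -
  have e0: "card (UNIV :: ('k^'d) set) = card (range (colmap \<gamma>)) * card {x \<in> UNIV. colmap \<gamma> x = colmap \<gamma> 0}"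
    by (rule fiber_card_total, simp, simp, simp) (simp add: colmap_diff colmap_zero)
  have k: "{x \<in> UNIV. colmap \<gamma> x = colmap \<gamma> 0} = perp (range \<gamma>)"
    unfolding perp_def colmap_def by (auto simp: vec_eq_iff dotk_comm)
  have e1: "CARD('k) ^ CARD('d) = card (range (colmap \<gamma>)) * card (perp (range \<gamma>))"
    using e0 k by simp
  have e2: "card (perp (range \<gamma>)) * card (vec.span (range \<gamma>)) = CARD('k) ^ CARD('d)"
    by (rule perp_card)
  have pos: "card (perp (range \<gamma>)) > 0"
    by (rule card_gt_0_iff[THEN iffD2]) (auto simp: perp_def intro!: exI[of _ 0])
  have "card (range (colmap \<gamma>)) * card (perp (range \<gamma>)) = CARD('k) ^ CARD('d)"
    by (rule e1[symmetric])
  also have "\<dots> = card (perp (range \<gamma>)) * card (vec.span (range \<gamma>))" by (rule e2[symmetric])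
  also have "\<dots> = card (vec.span (range \<gamma>)) * card (perp (range \<gamma>))" by (rule mult.commute)
  finally have "card (range (colmap \<gamma>)) * card (perp (range \<gamma>)) = card (vec.span (range \<gamma>)) * card (perp (range \<gamma>))" .
  then show ?thesis using mult_right_cancel[OF gr_implies_not0[OF pos]] by blast
qed

lemma colmap_range_perp:
  fixes \<gamma> :: "'m::finite \<Rightarrow> 'k::{field,finite}^'d"
  shows "range (colmap \<gamma>) = perp (Nset \<gamma>)"
proof (rule card_subset_eq)
  show "finite (perp (Nset \<gamma>))" by simp
  show "range (colmap \<gamma>) \<subseteq> perp (Nset \<gamma>)"
  proof
    fix t assume "t \<in> range (colmap \<gamma>)"
    then obtain z where t: "t = colmap \<gamma> z" by blast
    show "t \<in> perp (Nset \<gamma>)" unfolding perp_def mem_Collect_eq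
    proof
      fix \<mu> assume "\<mu> \<in> Nset \<gamma>"
      then have r: "rowmap \<gamma> \<mu> = 0" unfolding Nset_def by simp
      have "dotk t \<mu> = (\<Sum>i\<in>UNIV. dotk (\<gamma> i) z * \<mu>$i)" unfolding t colmap_def dotk_def by simp
      also have "\<dots> = dotk (rowmap \<gamma> \<mu>) z"
        unfolding rowmap_def by (simp add: dotk_sum_left dotk_scale_left mult.commute)
      finally show "dotk t \<mu> = 0" using r by simp
    qed
  qed
  have "card (perp (Nset \<gamma>)) * card (vec.span (Nset \<gamma>)) = CARD('k) ^ CARD('m)" by (rule perp_card)
  moreover have "vec.span (Nset \<gamma>) = Nset \<gamma>"
  proof -
    have "vec.subspace (Nset \<gamma>)" unfolding vec.subspace_def Nset_def
      by (simp add: rowmap_zero rowmap_add rowmap_scale)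
    then show ?thesis by (simp add: vec.span_eq_iff)
  qed
  ultimately have e1: "card (perp (Nset \<gamma>)) * card (Nset \<gamma>) = CARD('k) ^ CARD('m)" by simp
  have e2: "card (vec.span (range \<gamma>)) * card (Nset \<gamma>) = CARD('k) ^ CARD('m)" by (rule card_R_N)
  have pos: "card (Nset \<gamma>) > 0" by (rule card_gt_0_iff[THEN iffD2]) (auto simp: Nset_def rowmap_zero intro!: exI[of _ 0])
  have "card (perp (Nset \<gamma>)) * card (Nset \<gamma>) = card (vec.span (range \<gamma>)) * card (Nset \<gamma>)"
    using e1 e2 by (simp only:)
  then have "card (perp (Nset \<gamma>)) = card (vec.span (range \<gamma>))"
    using mult_right_cancel[OF gr_implies_not0[OF pos]] by blast
  then show "card (range (colmap \<gamma>)) = card (perp (Nset \<gamma>))" using card_colmap_range[of \<gamma>] by simp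
qed

lemma Z_char:
  fixes \<gamma> :: "'m::finite \<Rightarrow> 'k::{field,finite}^'d" and a :: "'m \<Rightarrow> 'k^'d1"
  shows "(\<forall>\<mu> :: 'm \<Rightarrow> 'k. (\<Sum>i\<in>UNIV. \<mu> i *s \<gamma> i) = 0 \<longrightarrow> (\<Sum>i\<in>UNIV. \<mu> i *s a i) = 0)
     \<longleftrightarrow> (\<forall>j. colj a j \<in> perp (Nset \<gamma>))"
proof
  assume H: "\<forall>\<mu> :: 'm \<Rightarrow> 'k. (\<Sum>i\<in>UNIV. \<mu> i *s \<gamma> i) = 0 \<longrightarrow> (\<Sum>i\<in>UNIV. \<mu> i *s a i) = 0"
  show "\<forall>j. colj a j \<in> perp (Nset \<gamma>)"
  proof (intro allI)
    fix j show "colj a j \<in> perp (Nset \<gamma>)" unfolding perp_def mem_Collect_eq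
    proof
      fix s assume "s \<in> Nset \<gamma>"
      then have "(\<Sum>i\<in>UNIV. s$i *s \<gamma> i) = 0" unfolding Nset_def rowmap_def by simp
      then have "(\<Sum>i\<in>UNIV. s$i *s a i) = 0" using H by blast
      then have "(\<Sum>i\<in>UNIV. s$i *s a i) $ j = 0" by simp
      then show "dotk (colj a j) s = 0" unfolding dotk_def colj_def by (simp add: sum_component mult.commute)
    qed
  qed
next
  assume H: "\<forall>j. colj a j \<in> perp (Nset \<gamma>)"
  show "\<forall>\<mu> :: 'm \<Rightarrow> 'k. (\<Sum>i\<in>UNIV. \<mu> i *s \<gamma> i) = 0 \<longrightarrow> (\<Sum>i\<in>UNIV. \<mu> i *s a i) = 0"
  proof (intro allI impI)
    fix \<mu> :: "'m \<Rightarrow> 'k" assume m: "(\<Sum>i\<in>UNIV. \<mu> i *s \<gamma> i) = 0"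
    have sN: "(\<chi> i. \<mu> i) \<in> Nset \<gamma>" unfolding Nset_def rowmap_def using m by simp
    show "(\<Sum>i\<in>UNIV. \<mu> i *s a i) = 0"
    proof (rule vec_eq_iff[THEN iffD2], rule allI)
      fix j
      have "dotk (colj a j) (\<chi> i. \<mu> i) = 0" using H sN unfolding perp_def by blast
      then show "(\<Sum>i\<in>UNIV. \<mu> i *s a i) $ j = 0 $ j"
        unfolding dotk_def colj_def by (simp add: sum_component mult.commute)
    qed
  qed
qed

lemma card_colset:
  fixes S :: "('k::{field,finite}^'m::finite) set"
  shows "card {c :: 'm \<Rightarrow> 'k^'d1. \<forall>j. colj c j \<in> S} = card S ^ CARD('d1)"
proof -
  let ?h = "\<lambda>c :: 'm \<Rightarrow> 'k^'d1. \<lambda>j. colj c j"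
  have inj: "inj_on ?h {c. \<forall>j. colj c j \<in> S}"
  proof (rule inj_onI)
    fix c c' assume "?h c = ?h c'"
    then have "\<forall>j i. c i $ j = c' i $ j" unfolding colj_def by (metis vec_lambda_beta)
    then show "c = c'" by (simp add: fun_eq_iff vec_eq_iff)
  qed
  have img: "?h ` {c. \<forall>j. colj c j \<in> S} = PiE UNIV (\<lambda>_. S)"
  proof
    show "?h ` {c. \<forall>j. colj c j \<in> S} \<subseteq> PiE UNIV (\<lambda>_. S)" by auto
    show "PiE UNIV (\<lambda>_. S) \<subseteq> ?h ` {c. \<forall>j. colj c j \<in> S}"
    proof
      fix w assume w: "w \<in> PiE (UNIV::'d1 set) (\<lambda>_. S)"
      define c where "c = (\<lambda>i. \<chi> j. w j $ i)"
      have "?h c = w" unfolding c_def colj_def by (simp add: fun_eq_iff vec_eq_iff)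
      moreover then have "c \<in> {c. \<forall>j. colj c j \<in> S}" using w by auto
      ultimately show "w \<in> ?h ` {c. \<forall>j. colj c j \<in> S}" by (metis image_eqI)
    qed
  qed
  have "card {c :: 'm \<Rightarrow> 'k^'d1. \<forall>j. colj c j \<in> S} = card (PiE (UNIV::'d1 set) (\<lambda>_. S))"
    using card_image[OF inj] img by simp
  also have "\<dots> = card S ^ CARD('d1)" by (simp add: card_PiE)
  finally show ?thesis .
qed



lemma lfa_add: "lin_form_apply g (x + y) = lin_form_apply g x + lin_form_apply g y"
  unfolding lin_form_apply_def by (simp add: vector_add_ldistrib sum.distrib)
lemma lfa_diff: "lin_form_apply g (x - y) = lin_form_apply g x - lin_form_apply g y"
  unfolding lin_form_apply_def by (simp add: vector_ssub_ldistrib sum_subtractf)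
lemma lfa_zero: "lin_form_apply g 0 = 0"
  unfolding lin_form_apply_def by simp
lemma lfa_neg: "lin_form_apply g (- x) = - lin_form_apply g x"
  using lfa_diff[of g 0 x] lfa_zero[of g] by simp

definition Fmap :: "('m::finite \<Rightarrow> 'k::field^'d) \<Rightarrow> ('k^'n \<Rightarrow> 'k^'d1) \<Rightarrow> ('k^'n)^'d \<Rightarrow> 'm \<Rightarrow> 'k^'d1" where
  "Fmap \<gamma> \<Gamma>1 x = (\<lambda>i. \<Gamma>1 (lin_form_apply (\<gamma> i) x))"

context
  fixes \<gamma> :: "'m::finite \<Rightarrow> 'k::{field,finite}^'d" and \<Gamma>1 :: "'k^'n \<Rightarrow> 'k^'d1"
  assumes lin1: "Vector_Spaces.linear (*s) (*s) \<Gamma>1" and surj1: "surj \<Gamma>1"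
begin

lemma G1_lfa: "\<Gamma>1 (lin_form_apply g x) = (\<Sum>r\<in>UNIV. g$r *s \<Gamma>1 (x$r))"
  unfolding lin_form_apply_def by (simp add: vec.linear_sum[OF lin1] vec.linear_scale[OF lin1])

lemma F_add: "Fmap \<gamma> \<Gamma>1 (x + y) i = Fmap \<gamma> \<Gamma>1 x i + Fmap \<gamma> \<Gamma>1 y i"
  unfolding Fmap_def by (simp add: lfa_add vec.linear_add[OF lin1])
lemma F_diff: "Fmap \<gamma> \<Gamma>1 (x - y) i = Fmap \<gamma> \<Gamma>1 x i - Fmap \<gamma> \<Gamma>1 y i"
  unfolding Fmap_def by (simp add: lfa_diff vec.linear_diff[OF lin1])
lemma F_zero: "Fmap \<gamma> \<Gamma>1 0 i = 0"
  unfolding Fmap_def by (simp add: lfa_zero vec.linear_0[OF lin1])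
lemma F_neg: "Fmap \<gamma> \<Gamma>1 (- x) i = - Fmap \<gamma> \<Gamma>1 x i"
  unfolding Fmap_def by (simp add: lfa_neg vec.linear_neg[OF lin1])

lemma F_hom: "(Fmap \<gamma> \<Gamma>1 x = Fmap \<gamma> \<Gamma>1 y) = (Fmap \<gamma> \<Gamma>1 (x - y) = Fmap \<gamma> \<Gamma>1 0)"
  by (simp add: fun_eq_iff F_diff F_zero)

lemma colj_F: "colj (Fmap \<gamma> \<Gamma>1 x) j = colmap \<gamma> (\<chi> r. \<Gamma>1 (x$r) $ j)"
  unfolding colj_def colmap_def Fmap_def dotk_def
  by (simp add: G1_lfa sum_component vec_eq_iff)

lemma rangeF: "range (Fmap \<gamma> \<Gamma>1) = {c. \<forall>j. colj c j \<in> perp (Nset \<gamma>)}"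
proof
  show "range (Fmap \<gamma> \<Gamma>1) \<subseteq> {c. \<forall>j. colj c j \<in> perp (Nset \<gamma>)}"
    using colj_F colmap_range_perp[of \<gamma>] by (auto simp del: colmap_range_perp)
  show "{c. \<forall>j. colj c j \<in> perp (Nset \<gamma>)} \<subseteq> range (Fmap \<gamma> \<Gamma>1)"
  proof
    fix c :: "'m \<Rightarrow> 'k^'d1" assume "c \<in> {c. \<forall>j. colj c j \<in> perp (Nset \<gamma>)}"
    then have "\<forall>j. \<exists>z. colmap \<gamma> z = colj c j" using colmap_range_perp[of \<gamma>] by (metis imageE mem_Collect_eq)
    then obtain z :: "'d1 \<Rightarrow> 'k^'d" where z: "\<And>j. colmap \<gamma> (z j) = colj c j" by metis
    define x where "x = (\<chi> r. inv_into UNIV \<Gamma>1 (\<chi> j. z j $ r))"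
    have gx: "(\<chi> r. \<Gamma>1 (x$r) $ j) = z j" for j
      unfolding x_def by (simp add: surj_f_inv_f[OF surj1] vec_eq_iff)
    have "Fmap \<gamma> \<Gamma>1 x = c"
    proof (rule ext, rule vec_eq_iff[THEN iffD2], rule allI)
      fix i j
      have "Fmap \<gamma> \<Gamma>1 x i $ j = colj (Fmap \<gamma> \<Gamma>1 x) j $ i" unfolding colj_def by simp
      also have "\<dots> = colj c j $ i" unfolding colj_F gx z ..
      finally show "Fmap \<gamma> \<Gamma>1 x i $ j = c i $ j" unfolding colj_def by simp
    qed
    then show "c \<in> range (Fmap \<gamma> \<Gamma>1)" by (metis rangeI)
  qed
qed

lemma card_rangeF: "card (range (Fmap \<gamma> \<Gamma>1)) = CARD('k) ^ (vec.dim (range \<gamma>) * CARD('d1))"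
proof -
  have "card (range (Fmap \<gamma> \<Gamma>1)) = card (perp (Nset \<gamma>)) ^ CARD('d1)"
    unfolding rangeF by (rule card_colset)
  also have "card (perp (Nset \<gamma>)) = card (vec.span (range \<gamma>))"
    using colmap_range_perp[of \<gamma>] card_colmap_range[of \<gamma>] by simp
  also have "\<dots> = CARD('k) ^ vec.dim (range \<gamma>)" by (rule card_span)
  finally show ?thesis by (simp add: power_mult)
qed

lemma card_W0: "card (range (Fmap \<gamma> \<Gamma>1)) * card {x. Fmap \<gamma> \<Gamma>1 x = Fmap \<gamma> \<Gamma>1 0}
   = CARD('k) ^ (CARD('n) * CARD('d))"
proof -
  have "card (UNIV :: (('k^'n)^'d) set) = card (range (Fmap \<gamma> \<Gamma>1)) * card {x \<in> UNIV. Fmap \<gamma> \<Gamma>1 x = Fmap \<gamma> \<Gamma>1 0}"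
    by (rule fiber_card_total, simp, simp, simp, rule F_hom)
  then show ?thesis by (simp add: power_mult)
qed

lemma card_W: "a \<in> range (Fmap \<gamma> \<Gamma>1) \<Longrightarrow> card {x. Fmap \<gamma> \<Gamma>1 x = a} = card {x. Fmap \<gamma> \<Gamma>1 x = Fmap \<gamma> \<Gamma>1 0}"
  using fiber_card_eq[of UNIV "Fmap \<gamma> \<Gamma>1" a] F_hom by simp

end



lemma mv_scale: "(A::'k::comm_ring_1^'n^'m) *v (c *s x) = c *s (A *v x)"
  by (simp add: matrix_vector_mult_def vec_eq_iff sum_distrib_left ac_simps)

definition bq :: "'k::comm_ring_1^'n^'n \<Rightarrow> 'k^'n \<Rightarrow> 'k^'n \<Rightarrow> 'k" where
  "bq A u v = dotk u (A *v v)"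

lemma bq_add_left: "bq A (u + u') v = bq A u v + bq A u' v"
  unfolding bq_def by (rule dotk_add_left)
lemma bq_add_right: "bq A u (v + v') = bq A u v + bq A u v'"
  unfolding bq_def by (simp add: matrix_vector_right_distrib dotk_add_right)
lemma bq_diff_right: "bq A u (v - v') = bq A u v - bq A u v'"
  unfolding bq_def by (simp add: matrix_vector_mult_diff_distrib dotk_diff_right)
lemma bq_scale_left: "bq A (c *s u) v = c * bq A u v"
  unfolding bq_def by (rule dotk_scale_left)

lemma bq_sym: assumes "transpose A = A" shows "bq A u v = bq A v u"
proof -
  have "bq A u v = (\<Sum>a\<in>UNIV. \<Sum>b\<in>UNIV. u$a * (A$a$b * v$b))"
    unfolding bq_def dotk_def matrix_vector_mult_def by (simp add: sum_distrib_left)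
  also have "\<dots> = (\<Sum>b\<in>UNIV. \<Sum>a\<in>UNIV. u$a * (A$a$b * v$b))" by (rule sum.swap)
  also have "\<dots> = (\<Sum>b\<in>UNIV. \<Sum>a\<in>UNIV. v$b * (A$b$a * u$a))"
  proof (rule sum.cong[OF refl], rule sum.cong[OF refl])
    fix a b
    have Asym: "A$a$b = A$b$a" using assms unfolding transpose_def vec_eq_iff by (metis vec_lambda_beta)
    show "u$b * (A$b$a * v$a) = v$a * (A$a$b * u$b)"
      by (simp only: Asym mult.commute mult.left_commute)
  qed
  also have "\<dots> = bq A v u"
    unfolding bq_def dotk_def matrix_vector_mult_def by (simp add: sum_distrib_left)
  finally show ?thesis .
qed

lemma bq_axis: assumes "transpose A = A" shows "bq A v (axis a 1) = (A *v v) $ a"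
  using bq_sym[OF assms, of v "axis a 1"] unfolding bq_def by (simp add: dotk_comm[of "axis a 1" "A *v v"] dotk_axis)

lemma quad_eq_bq: "(\<Sum>i\<in>UNIV. \<Sum>k\<in>UNIV. x$i * A$i$k * x$k) = bq A x x"
  unfolding bq_def dotk_def matrix_vector_mult_def by (simp add: sum_distrib_left mult.assoc)

definition PC :: "('k::comm_ring_1^'d2)^'m \<Rightarrow> ('k^'d2)^'m \<Rightarrow> 'k" where
  "PC C v = (\<Sum>i\<in>UNIV. dotk (C$i) (v$i))"

lemma PC_add_left: "PC (C + C') v = PC C v + PC C' v"
  unfolding PC_def by (simp add: dotk_add_left sum.distrib)
lemma PC_zero_right: "PC C 0 = 0"
  unfolding PC_def by simp
lemma PC_diff_right: "PC C (v - w) = PC C v - PC C w"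
  unfolding PC_def by (simp add: dotk_diff_right sum_subtractf)
lemma PC_zero_left: "PC 0 v = 0"
  unfolding PC_def by simp

lemma PC_nondeg:
  fixes v :: "('k::field^'d2)^'m"
  assumes "v \<noteq> 0" shows "\<exists>C. PC C v \<noteq> 0"
proof -
  obtain i where i: "v$i \<noteq> 0" using assms by (metis vec_eq_iff zero_index)
  then obtain a where a: "v$i$a \<noteq> 0" by (metis vec_eq_iff zero_index)
  define C :: "('k^'d2)^'m" where "C = (\<chi> i'. if i' = i then axis a 1 else 0)"
  have "PC C v = (\<Sum>i'\<in>UNIV. if i' = i then v$i$a else 0)"
    unfolding PC_def C_def by (rule sum.cong) (auto simp: dotk_comm[of "axis a 1"] dotk_axis)
  also have "\<dots> = v$i$a" by simp
  finally have "PC C v \<noteq> 0" using a by simp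
  then show ?thesis by (rule exI)
qed

definition Emb :: "'d \<Rightarrow> 'k::zero^'n \<Rightarrow> ('k^'n)^'d" where
  "Emb r k = (\<chi> t. if t = r then k else 0)"

lemma lfa_Emb: "lin_form_apply g (Emb r k) = g $ r *s k"
proof -
  have "lin_form_apply g (Emb r k) = (\<Sum>t\<in>UNIV. if t = r then g $ r *s k else 0)"
    unfolding lin_form_apply_def Emb_def by (rule sum.cong) auto
  then show ?thesis by simp
qed

context
  fixes \<Gamma>2 :: "'k::{field,finite}^'n \<Rightarrow> 'k^'d2" and M :: "'d2 \<Rightarrow> 'k^'n^'n"
    and \<gamma> :: "'m::finite \<Rightarrow> 'k^'d"
  assumes symM: "\<And>j. transpose (M j) = M j"
    and QM: "\<And>j x. \<Gamma>2 x $ j = (\<Sum>i\<in>UNIV. \<Sum>k\<in>UNIV. x$i * M j$i$k * x$k)"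
    and two: "(2::'k) \<noteq> 0"
begin

lemma Q_bq: "\<Gamma>2 x $ j = bq (M j) x x"
  using QM quad_eq_bq by simp

lemma Q_add: "\<Gamma>2 (u + v) $ j = \<Gamma>2 u $ j + \<Gamma>2 v $ j + 2 * bq (M j) u v"
proof -
  have "\<Gamma>2 (u + v) $ j = bq (M j) u u + bq (M j) u v + (bq (M j) v u + bq (M j) v v)"
    by (simp add: Q_bq bq_add_left bq_add_right)
  also have "bq (M j) v u = bq (M j) u v" by (rule bq_sym[OF symM])
  finally show ?thesis by (simp add: Q_bq algebra_simps)
qed

lemma assoc_bq: "assoc_bilinear (\<lambda>z. \<Gamma>2 z $ j) u v = bq (M j) u v"
  unfolding assoc_bilinear_def using two by (simp add: Q_add)

definition G2 :: "('k^'n)^'d \<Rightarrow> ('k^'d2)^'m" where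
  "G2 x = (\<chi> i. \<Gamma>2 (lin_form_apply (\<gamma> i) x))"

definition DC :: "('k^'d2)^'m \<Rightarrow> ('k^'n)^'d \<Rightarrow> ('k^'n)^'d \<Rightarrow> 'k" where
  "DC C x h = (\<Sum>i\<in>UNIV. \<Sum>j\<in>UNIV. C$i$j * (2 * bq (M j) (lin_form_apply (\<gamma> i) x) (lin_form_apply (\<gamma> i) h)))"

lemma PC_G2: "PC C (G2 x) = (\<Sum>i\<in>UNIV. \<Sum>j\<in>UNIV. C$i$j * \<Gamma>2 (lin_form_apply (\<gamma> i) x) $ j)"
  unfolding PC_def G2_def dotk_def by simp

lemma fq: "PC C (G2 (x + h)) = PC C (G2 x) + PC C (G2 h) + DC C x h"
  unfolding PC_G2 DC_def
  by (simp add: lfa_add Q_add distrib_left sum.distrib)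

lemma Dadd: "DC C (y + w) h = DC C y h + DC C w h"
  unfolding DC_def by (simp add: lfa_add bq_add_left distrib_left sum.distrib)

definition HC :: "('k^'d2)^'m \<Rightarrow> 'd \<Rightarrow> ('k^'n)^'d \<Rightarrow> 'k^'n" where
  "HC C r h = (\<Sum>i\<in>UNIV. \<Sum>j\<in>UNIV. (2 * C$i$j * \<gamma> i $ r) *s (M j *v lin_form_apply (\<gamma> i) h))"

lemma DC_Emb: "DC C (Emb r k) h = dotk k (HC C r h)"
  unfolding DC_def HC_def
  by (simp add: lfa_Emb dotk_sum_right dotk_scale_right dotk_scale_left bq_def ac_simps)

lemma HC_diff: "HC C r (h - h') = HC C r h - HC C r h'"
  unfolding HC_def
  by (simp add: lfa_diff matrix_vector_mult_diff_distrib vector_ssub_ldistrib sum_subtractf)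

lemma HC_Emb: "HC C r (Emb s k) = 2 *s (\<Sum>j\<in>UNIV. (\<Sum>i\<in>UNIV. C$i$j * (\<gamma> i $ r * \<gamma> i $ s)) *s (M j *v k))"
proof -
  have "HC C r (Emb s k) = (\<Sum>i\<in>UNIV. \<Sum>j\<in>UNIV. (2 * C$i$j * \<gamma> i $ r * \<gamma> i $ s) *s (M j *v k))"
    unfolding HC_def lfa_Emb
    by (simp add: mv_scale vec.scale_scale mult.assoc)
  also have "\<dots> = (\<Sum>j\<in>UNIV. \<Sum>i\<in>UNIV. (2 * C$i$j * \<gamma> i $ r * \<gamma> i $ s) *s (M j *v k))"
    by (rule sum.swap)
  also have "\<dots> = 2 *s (\<Sum>j\<in>UNIV. (\<Sum>i\<in>UNIV. C$i$j * (\<gamma> i $ r * \<gamma> i $ s)) *s (M j *v k))"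
    by (simp add: vec.scale_sum_right vec.scale_sum_left vec.scale_scale mult.assoc)
  finally show ?thesis .
qed

lemma T_eq: "(\<chi> a. \<Sum>j\<in>UNIV. c$j * assoc_bilinear (\<lambda>z. \<Gamma>2 z $ j) v (axis a 1))
   = (\<Sum>j\<in>UNIV. c$j *s (M j *v v))"
  by (simp add: vec_eq_iff assoc_bq bq_axis[OF symM] sum_component)

end



lemma Tadd: "(\<Sum>j\<in>UNIV. c$j *s ((M j :: 'k::field^'n^'n) *v (a + b)))
   = (\<Sum>j\<in>UNIV. c$j *s (M j *v a)) + (\<Sum>j\<in>UNIV. c$j *s (M j *v b))"
  by (simp add: matrix_vector_right_distrib vector_add_ldistrib sum.distrib)
lemma Tscale: "(\<Sum>j\<in>UNIV. c$j *s ((M j :: 'k::field^'n^'n) *v (t *s a)))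
   = t *s (\<Sum>j\<in>UNIV. c$j *s (M j *v a))"
  by (simp add: mv_scale vec.scale_sum_right vec.scale_scale mult.commute)
lemma Tzero: "(\<Sum>j\<in>UNIV. c$j *s ((M j :: 'k::field^'n^'n) *v 0)) = 0"
  by simp

context
  fixes \<gamma> :: "'m::finite \<Rightarrow> 'k::{field,finite}^'d" and \<Gamma>1 :: "'k^'n \<Rightarrow> 'k^'d1"
    and \<Gamma>2 :: "'k^'n \<Rightarrow> 'k^'d2" and M :: "'d2 \<Rightarrow> 'k^'n^'n"
  assumes lin1: "Vector_Spaces.linear (*s) (*s) \<Gamma>1" and surj1: "surj \<Gamma>1"
    and symM: "\<And>j. transpose (M j) = M j"
    and QM: "\<And>j x. \<Gamma>2 x $ j = (\<Sum>i\<in>UNIV. \<Sum>k\<in>UNIV. x$i * M j$i$k * x$k)"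
    and two: "(2::'k) \<noteq> 0"
begin

lemma card_K: "card {v. \<Gamma>1 v = 0} * CARD('k) ^ CARD('d1) = CARD('k) ^ CARD('n)"
proof -
  have h: "(\<Gamma>1 x = \<Gamma>1 y) = (\<Gamma>1 (x - y) = \<Gamma>1 0)" for x y
    by (simp add: vec.linear_diff[OF lin1] vec.linear_0[OF lin1])
  have "card (UNIV :: ('k^'n) set) = card (range \<Gamma>1) * card {x \<in> UNIV. \<Gamma>1 x = \<Gamma>1 0}"
    by (rule fiber_card_total, simp, simp, simp, rule h)
  then show ?thesis using surj1 by (simp add: vec.linear_0[OF lin1] mult.commute)
qed

lemma card_perpK: "card (perp {v. \<Gamma>1 v = 0}) = CARD('k) ^ CARD('d1)"
proof -
  let ?K = "{v. \<Gamma>1 v = 0}"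
  have sK: "vec.span ?K = ?K"
  proof -
    have "vec.subspace ?K" unfolding vec.subspace_def
      by (simp add: vec.linear_0[OF lin1] vec.linear_add[OF lin1] vec.linear_scale[OF lin1])
    then show ?thesis by (simp add: vec.span_eq_iff)
  qed
  have e1: "card (perp ?K) * card ?K = CARD('k) ^ CARD('n)" using perp_card[of ?K] sK by simp
  have pos: "card ?K > 0" by (rule card_gt_0_iff[THEN iffD2]) (auto intro!: exI[of _ 0] simp: vec.linear_0[OF lin1])
  have "card (perp ?K) * card ?K = CARD('k) ^ CARD('d1) * card ?K"
    using e1 card_K by (simp add: mult.commute)
  then show ?thesis using mult_right_cancel[OF gr_implies_not0[OF pos]] by blast
qed

lemma Emb_W0: "\<Gamma>1 k = 0 \<Longrightarrow> Fmap \<gamma> \<Gamma>1 (Emb r k) = Fmap \<gamma> \<Gamma>1 0"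
  by (simp add: fun_eq_iff Fmap_def lfa_Emb lfa_zero vec.linear_scale[OF lin1] vec.linear_0[OF lin1])

lemma rangeT_bound:
  fixes c :: "'k^'d2"
  defines "T \<equiv> \<lambda>v. (\<Sum>j\<in>UNIV. c$j *s (M j *v v))"
  shows "card (range T) \<le> CARD('k) ^ CARD('d1) * card (T ` {v. \<Gamma>1 v = 0})"
proof -
  let ?K = "{v. \<Gamma>1 v = 0}"
  let ?s = "inv_into UNIV \<Gamma>1"
  have "range T \<subseteq> (\<Union>y\<in>(UNIV :: ('k^'d1) set). (\<lambda>t. T (?s y) + t) ` (T ` ?K))"
  proof
    fix u assume "u \<in> range T"
    then obtain v where u: "u = T v" by blast
    have k: "v - ?s (\<Gamma>1 v) \<in> ?K"
      by (simp add: vec.linear_diff[OF lin1] surj_f_inv_f[OF surj1])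
    have "T v = T (?s (\<Gamma>1 v)) + T (v - ?s (\<Gamma>1 v))"
      unfolding T_def by (simp flip: Tadd)
    then show "u \<in> (\<Union>y\<in>(UNIV :: ('k^'d1) set). (\<lambda>t. T (?s y) + t) ` (T ` ?K))"
      using u k by blast
  qed
  then have "card (range T) \<le> card (\<Union>y\<in>(UNIV :: ('k^'d1) set). (\<lambda>t. T (?s y) + t) ` (T ` ?K))"
    by (rule card_mono[rotated]) simp
  also have "\<dots> \<le> (\<Sum>y\<in>(UNIV :: ('k^'d1) set). card ((\<lambda>t. T (?s y) + t) ` (T ` ?K)))"
    by (rule card_UN_le) simp
  also have "\<dots> \<le> (\<Sum>y\<in>(UNIV :: ('k^'d1) set). card (T ` ?K))"
    by (rule sum_mono) (rule card_image_le, simp)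
  also have "\<dots> = CARD('k) ^ CARD('d1) * card (T ` ?K)" by simp
  finally show ?thesis .
qed

lemma rangeT_card:
  fixes c :: "'k^'d2"
  defines "T \<equiv> \<lambda>v. (\<Sum>j\<in>UNIV. c$j *s (M j *v v))"
  shows "card (range T) = CARD('k) ^ vec.dim (range T)"
proof -
  have "vec.subspace (range T)" unfolding vec.subspace_def
  proof (intro conjI ballI allI)
    have "0 = T 0" unfolding T_def by simp
    then show "0 \<in> range T" by (rule image_eqI[OF _ UNIV_I])
    fix x y assume "x \<in> range T" "y \<in> range T"
    then obtain a b where "x = T a" "y = T b" by blast
    then have "x + y = T (a + b)" unfolding T_def by (simp only: Tadd)
    then show "x + y \<in> range T" by (rule image_eqI[OF _ UNIV_I])
  next
    fix t x assume "x \<in> range T"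
    then obtain a where "x = T a" by blast
    then have "t *s x = T (t *s a)" unfolding T_def by (simp only: Tscale)
    then show "t *s x \<in> range T" by (rule image_eqI[OF _ UNIV_I])
  qed
  then have sp: "vec.span (range T) = range T" by (simp add: vec.span_eq_iff)
  show ?thesis using card_span[of "range T"] unfolding sp .
qed

end



context
  fixes \<gamma> :: "'m::finite \<Rightarrow> 'k::{field,finite}^'d" and \<Gamma>1 :: "'k^'n \<Rightarrow> 'k^'d1"
    and \<Gamma>2 :: "'k^'n \<Rightarrow> 'k^'d2" and M :: "'d2 \<Rightarrow> 'k^'n^'n"
  assumes lin1: "Vector_Spaces.linear (*s) (*s) \<Gamma>1" and surj1: "surj \<Gamma>1"
    and symM: "\<And>j. transpose (M j) = M j"
    and QM: "\<And>j x. \<Gamma>2 x $ j = (\<Sum>i\<in>UNIV. \<Sum>k\<in>UNIV. x$i * M j$i$k * x$k)"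
    and two: "(2::'k) \<noteq> 0"
begin

lemma N_bound:
  fixes C :: "('k^'d2)^'m" and r0 s0 :: 'd and c :: "'k^'d2"
  assumes c_def: "c = (\<chi> j. \<Sum>i\<in>UNIV. C$i$j * (\<gamma> i $ r0 * \<gamma> i $ s0))"
    and rk: "vec.dim (range (\<lambda>v. \<Sum>j\<in>UNIV. c$j *s (M j *v v))) \<ge> r"
  shows "card {h \<in> {x. Fmap \<gamma> \<Gamma>1 x = Fmap \<gamma> \<Gamma>1 0}. \<forall>w\<in>{x. Fmap \<gamma> \<Gamma>1 x = Fmap \<gamma> \<Gamma>1 0}. DC M \<gamma> C w h = 0} * CARD('k) ^ r
     \<le> card {x. Fmap \<gamma> \<Gamma>1 x = Fmap \<gamma> \<Gamma>1 0} * CARD('k) ^ (2 * CARD('d1))"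
proof -
  let ?p = "CARD('k)"
  define W0 where "W0 = {x. Fmap \<gamma> \<Gamma>1 x = Fmap \<gamma> \<Gamma>1 0}"
  define K where "K = {v. \<Gamma>1 v = 0}"
  define H where "H = HC M \<gamma> C r0"
  define T where "T = (\<lambda>v. \<Sum>j\<in>UNIV. c$j *s (M j *v v))"
  define N where "N = {h \<in> W0. \<forall>w\<in>W0. DC M \<gamma> C w h = 0}"
  define ker where "ker = {h \<in> W0. H h = H 0}"
  have W0z: "0 \<in> W0" unfolding W0_def by simp
  have W0sub: "x - y \<in> W0" if "x \<in> W0" "y \<in> W0" for x y
    using that unfolding W0_def by (simp add: fun_eq_iff F_diff[OF lin1 surj1] F_zero[OF lin1 surj1])
  have H0: "H 0 = 0" unfolding H_def using HC_diff[OF symM QM two, of \<gamma> C r0 0 0] by simp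
  have Hhom: "(H x = H y) = (H (x - y) = H 0)" for x y
    unfolding H0 unfolding H_def by (simp add: HC_diff[OF symM QM two])
  have EmbW0: "Emb r k \<in> W0" if "k \<in> K" for r k
    using Emb_W0[OF lin1 surj1 symM QM two] that unfolding W0_def K_def by simp
  have NNb: "N \<subseteq> {h \<in> W0. H h \<in> perp K}"
  proof
    fix h assume h: "h \<in> N"
    have "dotk (H h) k = 0" if k: "k \<in> K" for k
    proof -
      have "DC M \<gamma> C (Emb r0 k) h = 0" using h EmbW0[OF k] unfolding N_def by blast
      then show ?thesis unfolding H_def DC_Emb[OF symM QM two] by (simp add: dotk_comm)
    qed
    then show "h \<in> {h \<in> W0. H h \<in> perp K}" using h unfolding N_def perp_def by blast
  qed
  have fib: "card {h \<in> W0. H h = t} = card ker" if "t \<in> H ` W0" for t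
    unfolding ker_def by (rule fiber_card_eq[OF _ W0z W0sub Hhom that]) simp_all
  have tot: "card W0 = card (H ` W0) * card ker"
    unfolding ker_def by (rule fiber_card_total[OF _ W0z W0sub Hhom]) simp
  have "{h \<in> W0. H h \<in> perp K} \<subseteq> (\<Union>t\<in>perp K \<inter> H ` W0. {h \<in> W0. H h = t})" by blast
  then have "card {h \<in> W0. H h \<in> perp K} \<le> card (\<Union>t\<in>perp K \<inter> H ` W0. {h \<in> W0. H h = t})"
    by (rule card_mono[rotated]) simp
  also have "\<dots> \<le> (\<Sum>t\<in>perp K \<inter> H ` W0. card {h \<in> W0. H h = t})"
    by (rule card_UN_le) simp
  also have "\<dots> = (\<Sum>t\<in>perp K \<inter> H ` W0. card ker)"
    by (rule sum.cong) (simp_all add: fib)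
  also have "\<dots> \<le> (\<Sum>t\<in>perp K. card ker)"
    by (rule sum_mono2) simp_all
  also have "\<dots> = ?p ^ CARD('d1) * card ker"
    using card_perpK[OF lin1 surj1 symM QM two] unfolding K_def by simp
  finally have Nb: "card {h \<in> W0. H h \<in> perp K} \<le> ?p ^ CARD('d1) * card ker" .
  have cardN: "card N \<le> ?p ^ CARD('d1) * card ker"
    using card_mono[OF _ NNb] Nb by (meson finite order_trans)
  have TK: "card (T ` K) \<le> card (H ` W0)"
  proof -
    have inj2: "inj ((*s) (2::'k) :: 'k^'n \<Rightarrow> 'k^'n)"
      by (rule injI) (simp add: vec_eq_iff two)
    have "(*s) 2 ` (T ` K) \<subseteq> H ` W0"
    proof
      fix u assume "u \<in> (*s) 2 ` (T ` K)"
      then obtain k where k: "k \<in> K" "u = 2 *s T k" by blast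
      have "H (Emb s0 k) = 2 *s T k"
        unfolding H_def T_def c_def HC_Emb[OF symM QM two] by simp
      then show "u \<in> H ` W0" using k EmbW0[OF k(1)] by (metis image_eqI)
    qed
    then have "card ((*s) 2 ` (T ` K)) \<le> card (H ` W0)" by (rule card_mono[rotated]) simp
    moreover have "card ((*s) 2 ` (T ` K)) = card (T ` K)"
      by (rule card_image) (rule inj_on_subset[OF inj2], simp)
    ultimately show ?thesis by simp
  qed
  have rT: "card (range T) \<le> ?p ^ CARD('d1) * card (T ` K)"
    unfolding T_def K_def by (rule rangeT_bound[OF lin1 surj1 symM QM two])
  have rT2: "?p ^ r \<le> card (range T)"
  proof -
    have "card (range T) = ?p ^ vec.dim (range T)"
      unfolding T_def by (rule rangeT_card[OF lin1 surj1 symM QM two])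
    moreover have "?p ^ r \<le> ?p ^ vec.dim (range T)"
      using rk unfolding T_def by (intro power_increasing) simp_all
    ultimately show ?thesis by simp
  qed
  have "card N * ?p ^ r \<le> (?p ^ CARD('d1) * card ker) * (?p ^ CARD('d1) * card (T ` K))"
    using cardN rT2 rT by (meson le_trans mult_le_mono)
  also have "\<dots> \<le> (?p ^ CARD('d1) * card ker) * (?p ^ CARD('d1) * card (H ` W0))"
    using TK by simp
  also have "\<dots> = card W0 * ?p ^ (2 * CARD('d1))"
    unfolding tot by (simp add: power_mult power2_eq_square algebra_simps)
  finally show ?thesis unfolding N_def W0_def .
qed

end



lemma powr_sq_aux:
  fixes p :: real and d1 r :: nat
  assumes "p > 0"
  shows "(p powr (real d1 - real r / 2))^2 = p ^ (2 * d1) / p ^ r"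
proof -
  have "(p powr (real d1 - real r / 2))^2 = p powr (2 * (real d1 - real r / 2))"
    using powr_power[of p "real d1 - real r / 2" 2] assms by simp
  also have "2 * (real d1 - real r / 2) = real (2 * d1) - real r" by simp
  also have "p powr (real (2 * d1) - real r) = p powr real (2 * d1) / p powr real r"
    by (rule powr_diff)
  also have "\<dots> = p ^ (2 * d1) / p ^ r" using assms by (simp only: powr_realpow)
  finally show ?thesis .
qed

context
  fixes \<gamma> :: "'m::finite \<Rightarrow> 'k::{field,finite}^'d" and \<Gamma>1 :: "'k^'n \<Rightarrow> 'k^'d1"
    and \<Gamma>2 :: "'k^'n \<Rightarrow> 'k^'d2" and M :: "'d2 \<Rightarrow> 'k^'n^'n" and r :: nat
  assumes pr: "prime CARD('k)"
    and sqind: "square_independent \<gamma>"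
    and lin1: "Vector_Spaces.linear (*s) (*s) \<Gamma>1" and surj1: "surj \<Gamma>1"
    and symM: "\<And>j. transpose (M j) = M j"
    and QM: "\<And>j x. \<Gamma>2 x $ j = (\<Sum>i\<in>UNIV. \<Sum>k\<in>UNIV. x$i * M j$i$k * x$k)"
    and two: "(2::'k) \<noteq> 0"
    and rank2: "quad_rank_at_least \<Gamma>2 r"
begin

lemma S_bound:
  fixes C :: "('k^'d2)^'m" and a :: "'m \<Rightarrow> 'k^'d1"
  assumes C0: "C \<noteq> 0" and aF: "a \<in> range (Fmap \<gamma> \<Gamma>1)"
  shows "norm (\<Sum>x\<in>{x. Fmap \<gamma> \<Gamma>1 x = a}. psi (PC C (G2 \<Gamma>2 \<gamma> x)))
     \<le> real (card {x. Fmap \<gamma> \<Gamma>1 x = Fmap \<gamma> \<Gamma>1 0}) * real CARD('k) powr (real CARD('d1) - real r / 2)"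
proof -
  let ?p = "CARD('k)"
  define W where "W = {x. Fmap \<gamma> \<Gamma>1 x = a}"
  define W0 where "W0 = {x. Fmap \<gamma> \<Gamma>1 x = Fmap \<gamma> \<Gamma>1 0}"
  define N where "N = {h \<in> W0. \<forall>w\<in>W0. DC M \<gamma> C w h = 0}"
  define S where "S = (\<Sum>x\<in>W. psi (PC C (G2 \<Gamma>2 \<gamma> x)))"
  have g: "(norm S)^2 \<le> real (card W) * real (card N)"
    unfolding S_def N_def
  proof (rule gauss[OF pr])
    fix y h assume y: "y \<in> W"
    show "(y + h \<in> W) = (h \<in> W0)"
      using y unfolding W_def W0_def by (auto simp: fun_eq_iff F_add[OF lin1 surj1] F_zero[OF lin1 surj1])
  next
    fix w assume "w \<in> W0"
    then show "- w \<in> W0" unfolding W0_def by (auto simp: fun_eq_iff F_neg[OF lin1 surj1] F_zero[OF lin1 surj1])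
  next
    fix y h show "PC C (G2 \<Gamma>2 \<gamma> (y + h)) = PC C (G2 \<Gamma>2 \<gamma> y) + PC C (G2 \<Gamma>2 \<gamma> h) + DC M \<gamma> C y h"
      by (rule fq[OF symM QM two])
  next
    fix y w h show "DC M \<gamma> C (y + w) h = DC M \<gamma> C y h + DC M \<gamma> C w h"
      by (rule Dadd[OF symM QM two])
  qed
  have cW: "card W = card W0" unfolding W_def W0_def by (rule card_W[OF lin1 surj1 aF])
  obtain i0 j0 where ij: "C$i0$j0 \<noteq> 0" using C0 by (metis vec_eq_iff zero_index)
  have "\<exists>r0 s0. (\<Sum>i\<in>UNIV. C$i$j0 * (\<gamma> i $ r0 * \<gamma> i $ s0)) \<noteq> 0"
  proof (rule ccontr)
    assume "\<not> ?thesis"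
    then have "\<forall>r0 s0. (\<Sum>i\<in>UNIV. C$i$j0 * (\<gamma> i $ r0 * \<gamma> i $ s0)) = 0" by blast
    then have "\<forall>i. C$i$j0 = 0"
      using sqind[unfolded square_independent_def, rule_format, of "\<lambda>i. C$i$j0"] by blast
    then show False using ij by blast
  qed
  then obtain r0 s0 where rs: "(\<Sum>i\<in>UNIV. C$i$j0 * (\<gamma> i $ r0 * \<gamma> i $ s0)) \<noteq> 0" by blast
  define c where "c = (\<chi> j. \<Sum>i\<in>UNIV. C$i$j * (\<gamma> i $ r0 * \<gamma> i $ s0))"
  have cj: "c$j0 \<noteq> 0" using rs unfolding c_def by simp
  have c0: "c \<noteq> 0"
  proof
    assume "c = 0" then have "c$j0 = 0" by simp
    then show False using cj by simp
  qed
  have rk: "vec.dim (range (\<lambda>v. \<Sum>j\<in>UNIV. c$j *s (M j *v v))) \<ge> r"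
  proof -
    have "bilinear_rank (\<lambda>x y. \<Sum>j\<in>UNIV. c $ j * assoc_bilinear (\<lambda>z. \<Gamma>2 z $ j) x y) \<ge> r"
      using rank2 c0 unfolding quad_rank_at_least_def by blast
    then have h1: "r \<le> vec.dim (range (\<lambda>x. \<chi> k. \<Sum>j\<in>UNIV. c $ j * assoc_bilinear (\<lambda>z. \<Gamma>2 z $ j) x (axis k 1)))"
      unfolding bilinear_rank_def .
    have e: "(\<lambda>x. \<chi> k. \<Sum>j\<in>UNIV. c $ j * assoc_bilinear (\<lambda>z. \<Gamma>2 z $ j) x (axis k 1))
        = (\<lambda>v. \<Sum>j\<in>UNIV. c$j *s (M j *v v))"
      by (rule ext) (rule T_eq[OF symM QM two])
    show ?thesis using h1 unfolding e .
  qed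
  have nb: "card N * ?p ^ r \<le> card W0 * ?p ^ (2 * CARD('d1))"
    unfolding N_def W0_def by (rule N_bound[OF lin1 surj1 symM QM two c_def rk])
  define w where "w = real (card W0)"
  define pR where "pR = real ?p"
  have pR0: "pR > 0" unfolding pR_def by simp
  have nbR: "real (card N) \<le> w * pR ^ (2 * CARD('d1)) / pR ^ r"
  proof -
    have "real (card N * ?p ^ r) \<le> real (card W0 * ?p ^ (2 * CARD('d1)))"
      using nb by (simp only: of_nat_le_iff)
    then have "real (card N) * pR ^ r \<le> w * pR ^ (2 * CARD('d1))"
      unfolding w_def pR_def by (simp only: of_nat_mult of_nat_power)
    then show ?thesis using pR0 by (simp add: field_simps)
  qed
  have "real (card W) * real (card N) \<le> w * (w * pR ^ (2 * CARD('d1)) / pR ^ r)"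
    using mult_left_mono[OF nbR, of w] cW unfolding w_def by simp
  then have "(norm S)^2 \<le> w * (w * pR ^ (2 * CARD('d1)) / pR ^ r)"
    using g by (rule order_trans[rotated])
  also have "\<dots> = w^2 * (pR powr (real CARD('d1) - real r / 2))^2"
    unfolding powr_sq_aux[OF pR0, of "CARD('d1)" r] by (simp add: power2_eq_square)
  also have "\<dots> = (w * pR powr (real CARD('d1) - real r / 2))^2"
    by (simp only: power_mult_distrib)
  finally have "(norm S)^2 \<le> (w * pR powr (real CARD('d1) - real r / 2))^2" .
  then have "norm S \<le> w * pR powr (real CARD('d1) - real r / 2)"
    by (rule power2_le_imp_le) (simp add: w_def)
  then show ?thesis unfolding S_def W_def w_def pR_def W0_def .
qed

end



context
  fixes \<gamma> :: "'m::finite \<Rightarrow> 'k::{field,finite}^'d" and \<Gamma>1 :: "'k^'n \<Rightarrow> 'k^'d1"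
    and \<Gamma>2 :: "'k^'n \<Rightarrow> 'k^'d2" and M :: "'d2 \<Rightarrow> 'k^'n^'n" and r :: nat
  assumes pr: "prime CARD('k)"
    and sqind: "square_independent \<gamma>"
    and lin1: "Vector_Spaces.linear (*s) (*s) \<Gamma>1" and surj1: "surj \<Gamma>1"
    and symM: "\<And>j. transpose (M j) = M j"
    and QM: "\<And>j x. \<Gamma>2 x $ j = (\<Sum>i\<in>UNIV. \<Sum>k\<in>UNIV. x$i * M j$i$k * x$k)"
    and two: "(2::'k) \<noteq> 0"
    and rank2: "quad_rank_at_least \<Gamma>2 r"
begin

lemma count_bound:
  fixes a :: "'m \<Rightarrow> 'k^'d1" and b' :: "('k^'d2)^'m"
  assumes aF: "a \<in> range (Fmap \<gamma> \<Gamma>1)"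
  shows "\<bar>real CARD(('k^'d2)^'m) * real (card {x \<in> {x. Fmap \<gamma> \<Gamma>1 x = a}. G2 \<Gamma>2 \<gamma> x = b'})
           - real (card {x. Fmap \<gamma> \<Gamma>1 x = Fmap \<gamma> \<Gamma>1 0})\<bar>
     \<le> (real CARD(('k^'d2)^'m) - 1) *
        (real (card {x. Fmap \<gamma> \<Gamma>1 x = Fmap \<gamma> \<Gamma>1 0}) * real CARD('k) powr (real CARD('d1) - real r / 2))"
proof -
  define W where "W = {x. Fmap \<gamma> \<Gamma>1 x = a}"
  define W0 where "W0 = {x. Fmap \<gamma> \<Gamma>1 x = Fmap \<gamma> \<Gamma>1 0}"
  define G where "G = CARD(('k^'d2)^'m)"
  define S where "S C = (\<Sum>x\<in>W. psi (PC C (G2 \<Gamma>2 \<gamma> x)))" for C :: "('k^'d2)^'m"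
  define B where "B = real (card W0) * real CARD('k) powr (real CARD('d1) - real r / 2)"
  define cnt where "cnt = card {x \<in> W. G2 \<Gamma>2 \<gamma> x = b'}"
  have cW: "card W = card W0" unfolding W_def W0_def by (rule card_W[OF lin1 surj1 aF])
  have four: "(\<Sum>C\<in>UNIV. psi (PC C v)) = (if v = 0 then of_nat G else 0)" for v :: "('k^'d2)^'m"
    unfolding G_def by (rule fourier[OF pr]) (simp_all add: PC_add_left PC_zero_right PC_nondeg)
  have "of_nat G * of_nat cnt = (\<Sum>x\<in>W. if G2 \<Gamma>2 \<gamma> x = b' then (of_nat G :: complex) else 0)"
  proof -
    have "of_nat cnt = (\<Sum>x\<in>{x \<in> W. G2 \<Gamma>2 \<gamma> x = b'}. (1::complex))" unfolding cnt_def by simp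
    also have "\<dots> = (\<Sum>x\<in>W. if G2 \<Gamma>2 \<gamma> x = b' then 1 else 0)"
      by (rule sum.inter_filter) simp
    finally show ?thesis by (simp add: sum_distrib_left if_distrib cong: if_cong)
  qed
  also have "\<dots> = (\<Sum>x\<in>W. \<Sum>C\<in>UNIV. psi (PC C (G2 \<Gamma>2 \<gamma> x - b')))"
    by (rule sum.cong) (simp_all add: four)
  also have "\<dots> = (\<Sum>x\<in>W. \<Sum>C\<in>UNIV. cnj (psi (PC C b')) * psi (PC C (G2 \<Gamma>2 \<gamma> x)))"
    by (simp add: PC_diff_right psi_diff[OF pr] mult.commute)
  also have "\<dots> = (\<Sum>C\<in>UNIV. \<Sum>x\<in>W. cnj (psi (PC C b')) * psi (PC C (G2 \<Gamma>2 \<gamma> x)))"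
    by (rule sum.swap)
  also have "\<dots> = (\<Sum>C\<in>UNIV. cnj (psi (PC C b')) * S C)"
    unfolding S_def by (simp only: sum_distrib_left)
  also have "\<dots> = cnj (psi (PC 0 b')) * S 0 + (\<Sum>C\<in>UNIV - {0}. cnj (psi (PC C b')) * S C)"
    by (rule sum.remove) simp_all
  also have "cnj (psi (PC 0 b')) * S 0 = of_nat (card W)"
    unfolding S_def by (simp add: PC_zero_left psi_zero[OF pr])
  finally have E: "of_nat G * of_nat cnt - of_nat (card W) = (\<Sum>C\<in>UNIV - {0}. cnj (psi (PC C b')) * S C)"
    by simp
  have "norm (\<Sum>C\<in>UNIV - {0}. cnj (psi (PC C b')) * S C) \<le> (\<Sum>C\<in>UNIV - {0}. norm (cnj (psi (PC C b')) * S C))"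
    by (rule norm_sum)
  also have "\<dots> = (\<Sum>C\<in>UNIV - {0}. norm (S C))"
    by (simp add: norm_mult norm_psi[OF pr])
  also have "\<dots> \<le> (\<Sum>C\<in>(UNIV::(('k^'d2)^'m) set) - {0}. B)"
  proof (rule sum_mono)
    fix C :: "('k^'d2)^'m" assume "C \<in> UNIV - {0}"
    then have "C \<noteq> 0" by simp
    then show "norm (S C) \<le> B" unfolding S_def W_def B_def W0_def
      by (rule S_bound[OF pr sqind lin1 surj1 symM QM two rank2 _ aF])
  qed
  also have "\<dots> = (real G - 1) * B"
    unfolding G_def by (simp add: card_Diff_singleton of_nat_diff)
  finally have "norm (of_nat G * of_nat cnt - of_nat (card W) :: complex) \<le> (real G - 1) * B"
    unfolding E .
  moreover have "(of_nat G * of_nat cnt - of_nat (card W) :: complex) = of_real (real G * real cnt - real (card W))"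
    by simp
  ultimately have "\<bar>real G * real cnt - real (card W)\<bar> \<le> (real G - 1) * B"
    by (metis norm_of_real)
  then show ?thesis unfolding G_def cnt_def B_def W_def W0_def cW[unfolded W_def W0_def] .
qed

end



theorem lemma3p8:
  fixes \<gamma> :: "'m::finite \<Rightarrow> 'k::{field,finite} ^ 'd"
    and \<Gamma>1 :: "'k ^ 'n \<Rightarrow> 'k ^ 'd1"
    and \<Gamma>2 :: "'k ^ 'n \<Rightarrow> 'k ^ 'd2"
    and a :: "'m \<Rightarrow> 'k ^ 'd1"
    and b :: "'m \<Rightarrow> 'k ^ 'd2"
    and r :: nat
  assumes p_prime: "prime CARD('k)"
    and p_odd: "odd CARD('k)"
    and sqind: "square_independent \<gamma>"
    and lin1: "Vector_Spaces.linear (*s) (*s) \<Gamma>1"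
    and surj1: "surj \<Gamma>1"
    and quad2: "is_quadratic_map \<Gamma>2"
    and rank2: "quad_rank_at_least \<Gamma>2 r"
  defines "p \<equiv> CARD('k)"
    and "d1 \<equiv> CARD('d1)"
    and "d2 \<equiv> CARD('d2)"
    and "m \<equiv> CARD('m)"
    and "d' \<equiv> vec.dim (range \<gamma>)"
    and "Z \<equiv> {c :: 'm \<Rightarrow> 'k ^ 'd1. \<forall>\<mu> :: 'm \<Rightarrow> 'k.
                 (\<Sum>i\<in>UNIV. \<mu> i *s \<gamma> i) = 0 \<longrightarrow> (\<Sum>i\<in>UNIV. \<mu> i *s c i) = 0}"
    and "P \<equiv> real (card {x :: ('k ^ 'n) ^ 'd. \<forall>i. \<Gamma>1 (lin_form_apply (\<gamma> i) x) = a i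
                                              \<and> \<Gamma>2 (lin_form_apply (\<gamma> i) x) = b i})
             / real (card (UNIV :: (('k ^ 'n) ^ 'd) set))"
  shows "(a \<notin> Z \<longrightarrow> P = 0) \<and>
         (a \<in> Z \<longrightarrow> \<bar>P - real p powr (- (real d1 * real d' + real d2 * real m))\<bar>
                     \<le> real p powr (real d1 - real d' * real d1 - real r / 2))"
proof -
  have "\<forall>j. \<exists>Mj::'k^'n^'n. transpose Mj = Mj \<and> (\<forall>x. \<Gamma>2 x $ j = (\<Sum>i\<in>UNIV. \<Sum>k\<in>UNIV. x$i * Mj$i$k * x$k))"
    using quad2 unfolding is_quadratic_map_def is_quadratic_form_def by blast
  then obtain M :: "'d2 \<Rightarrow> 'k^'n^'n" where
    M: "\<forall>j. transpose (M j) = M j \<and> (\<forall>x. \<Gamma>2 x $ j = (\<Sum>i\<in>UNIV. \<Sum>k\<in>UNIV. x$i * M j$i$k * x$k))"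
    using choice[of "\<lambda>j Mj. transpose Mj = Mj \<and> (\<forall>x. \<Gamma>2 x $ j = (\<Sum>i\<in>UNIV. \<Sum>k\<in>UNIV. x$i * Mj$i$k * x$k))"]
    by blast
  have symM: "\<And>j. transpose (M j) = M j" using M by blast
  have QM: "\<And>j x. \<Gamma>2 x $ j = (\<Sum>i\<in>UNIV. \<Sum>k\<in>UNIV. x$i * M j$i$k * x$k)" using M by blast
  have two: "(2::'k) \<noteq> 0"
  proof
    assume "(2::'k) = 0"
    then have "(of_nat 2 :: 'k) = 0" by simp
    then have "CHAR('k) dvd 2" by (simp only: of_nat_eq_0_iff_char_dvd)
    then have "CARD('k) dvd 2" using CHAR_eq_CARD[OF p_prime] by simp
    moreover have "CARD('k) \<ge> 2" using p_prime prime_ge_2_nat by blast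
    ultimately have "CARD('k) = 2" by (simp add: dvd_imp_le le_antisym)
    then show False using p_odd by simp
  qed
  have ZF: "Z = range (Fmap \<gamma> \<Gamma>1)"
    unfolding Z_def rangeF[OF lin1 surj1] using Z_char[of \<gamma>] by blast
  define W where "W = {x. Fmap \<gamma> \<Gamma>1 x = a}"
  define W0 where "W0 = {x. Fmap \<gamma> \<Gamma>1 x = Fmap \<gamma> \<Gamma>1 0}"
  define b' :: "('k^'d2)^'m" where "b' = (\<chi> i. b i)"
  have setEq: "{x :: ('k ^ 'n) ^ 'd. \<forall>i. \<Gamma>1 (lin_form_apply (\<gamma> i) x) = a i
                                              \<and> \<Gamma>2 (lin_form_apply (\<gamma> i) x) = b i}
        = {x \<in> W. G2 \<Gamma>2 \<gamma> x = b'}"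
    unfolding W_def b'_def G2_def[OF symM QM two] Fmap_def by (auto simp: fun_eq_iff vec_eq_iff)
  show ?thesis
  proof (intro conjI impI)
    assume "a \<notin> Z"
    then have "W = {}" unfolding W_def ZF by auto
    then show "P = 0" unfolding P_def setEq by simp
  next
    assume aZ: "a \<in> Z"
    then have aF: "a \<in> range (Fmap \<gamma> \<Gamma>1)" unfolding ZF .
    define cnt where "cnt = card {x \<in> W. G2 \<Gamma>2 \<gamma> x = b'}"
    define G where "G = real CARD(('k^'d2)^'m)"
    define w where "w = real (card W0)"
    define pr where "pr = real p"
    define X where "X = pr powr (real d1 - real r / 2)"
    define U where "U = real (card (UNIV :: (('k ^ 'n) ^ 'd) set))"
    have pr0: "pr > 0" unfolding pr_def p_def by simp
    have cb: "\<bar>G * real cnt - w\<bar> \<le> (G - 1) * (w * X)"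
      using count_bound[OF p_prime sqind lin1 surj1 symM QM two rank2 aF, of b']
      unfolding G_def cnt_def w_def X_def W_def W0_def pr_def p_def d1_def .
    have Gp: "G = pr ^ (d2 * m)" unfolding G_def pr_def p_def d2_def m_def by (simp add: power_mult)
    have Uw: "U = pr ^ (d' * d1) * w"
    proof -
      have "card (range (Fmap \<gamma> \<Gamma>1)) * card W0 = CARD('k) ^ (CARD('n) * CARD('d))"
        unfolding W0_def by (rule card_W0[OF lin1 surj1])
      then have "real (CARD('k) ^ (d' * d1) * card W0) = real (CARD('k) ^ (CARD('n) * CARD('d)))"
        unfolding card_rangeF[OF lin1 surj1] d'_def d1_def by simp
      then show ?thesis unfolding U_def w_def pr_def p_def by (simp add: power_mult)
    qed
    have G1: "G \<ge> 1" unfolding Gp using pr0 unfolding pr_def by simp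
    have w0: "w > 0"
    proof -
      have "0 \<in> W0" unfolding W0_def by simp
      then show ?thesis unfolding w_def by (auto simp: card_gt_0_iff)
    qed
    have X0: "X \<ge> 0" unfolding X_def by simp
    have Pc: "P = real cnt / U" unfolding P_def setEq cnt_def U_def ..
    have e1: "real p powr (- (real d1 * real d' + real d2 * real m)) = w / (U * G)"
    proof -
      have "real p powr (- (real d1 * real d' + real d2 * real m)) = inverse (pr powr (real (d' * d1 + d2 * m)))"
      proof -
        have "- (real d1 * real d' + real d2 * real m) = - real (d' * d1 + d2 * m)" by simp
        then show ?thesis unfolding pr_def by (simp only: powr_minus)
      qed
      also have "pr powr (real (d' * d1 + d2 * m)) = pr ^ (d' * d1) * G"
        unfolding Gp by (simp only: powr_realpow[OF pr0] power_add)
      finally show ?thesis unfolding Uw using w0 by (simp add: field_simps)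
    qed
    have e2: "real p powr (real d1 - real d' * real d1 - real r / 2) = X / pr ^ (d' * d1)"
    proof -
      have "real d1 - real d' * real d1 - real r / 2 = (real d1 - real r / 2) - real (d' * d1)" by simp
      then have "real p powr (real d1 - real d' * real d1 - real r / 2) = X / pr powr real (d' * d1)"
        unfolding X_def pr_def by (simp only: powr_diff)
      then show ?thesis by (simp only: powr_realpow[OF pr0])
    qed
    have UG0: "U * G > 0" using Uw Gp pr0 w0 by simp
    have "P - real p powr (- (real d1 * real d' + real d2 * real m)) = (G * real cnt - w) / (U * G)"
      unfolding Pc e1 using UG0 Uw Gp pr0 w0 by (simp add: field_simps)
    then have "\<bar>P - real p powr (- (real d1 * real d' + real d2 * real m))\<bar> = \<bar>G * real cnt - w\<bar> / (U * G)"
      using UG0 by simp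
    also have "\<dots> \<le> (G - 1) * (w * X) / (U * G)"
      using cb UG0 by (simp add: divide_right_mono)
    also have "\<dots> \<le> G * (w * X) / (U * G)"
      using UG0 w0 X0 by (intro divide_right_mono mult_right_mono) simp_all
    also have "\<dots> = X / pr ^ (d' * d1)"
      unfolding Uw using w0 G1 pr0 by (simp add: field_simps)
    finally show "\<bar>P - real p powr (- (real d1 * real d' + real d2 * real m))\<bar>
                     \<le> real p powr (real d1 - real d' * real d1 - real r / 2)"
      unfolding e2 .
  qed
qed


end
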